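(* Let $X$ be a strictly $k$-affinoid space, let $\underline r=(r_1,\dots,r_n)$ be a polyradius with $r_i>1$ and $r_i\in\sqrt{|k^\times|}$ for all $i$, and let $S\subseteq X\times\mathbb B_{\underline r}$ be an overconvergent subanalytic subset of $X\times\mathbb B_{\underline r}$. Then $\pi(S\cap(X\times\mathbb B^n))$ is an overconvergent subanalytic subset of $X$, where $\pi:X\times\mathbb B_{\underline r}\to X$ is the projection.
   Context: $k$ is a complete non-archimedean field with non-trivial absolute value; spaces are Berkovich spaces. $\mathbb B_{\underline r}=\mathcal M(k\{r_1^{-1}T_1,\dots,r_n^{-1}T_n\})$, $\mathbb B^n_r$ the polydisc of polyradius $(r,\dots,r)$, $\mathbb B^n=\mathbb B^n_1$. A subset of a $k$-affinoid space $X=\mathcal M(\mathcal A)$ is semianalytic if it is a finite Boolean combination of sets $\{x\in X:|f(x)|\le|g(x)|\}$, $f,g\in\mathcal A$. A subset $S$ of a strictly $k$-affinoid space $Z$ is overconvergent subanalytic if there exist $m\in\mathbb N$, a real $s>1$ and a semianalytic $T\subseteq Z\times\mathbb B^m_s$ with $S=p(T\cap(Z\times\mathbb B^m))$, $p$ the projection to $Z$. *)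

theory Defs
  imports Complex_Main
begin

definition nonarch_abs :: "('k::field \<Rightarrow> real) \<Rightarrow> bool" where
  "nonarch_abs absv \<longleftrightarrow>
     (\<forall>x. 0 \<le> absv x) \<and> (\<forall>x. absv x = 0 \<longleftrightarrow> x = 0) \<and>
     (\<forall>x y. absv (x * y) = absv x * absv y) \<and>
     (\<forall>x y. absv (x + y) \<le> max (absv x) (absv y))"

definition complete_abs :: "('k::field \<Rightarrow> real) \<Rightarrow> bool" where
  "complete_abs absv \<longleftrightarrow>
     (\<forall>u::nat \<Rightarrow> 'k. (\<forall>e>0. \<exists>N. \<forall>p\<ge>N. \<forall>q\<ge>N. absv (u p - u q) < e) \<longrightarrow>
        (\<exists>l. \<forall>e>0. \<exists>N. \<forall>p\<ge>N. absv (u p - l) < e))"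

definition nontrivial_abs :: "('k::field \<Rightarrow> real) \<Rightarrow> bool" where
  "nontrivial_abs absv \<longleftrightarrow> (\<exists>c. absv c \<noteq> 0 \<and> absv c \<noteq> 1)"

definition valued_field :: "('k::field \<Rightarrow> real) \<Rightarrow> bool" where
  "valued_field absv \<longleftrightarrow> nonarch_abs absv \<and> complete_abs absv \<and> nontrivial_abs absv"

text \<open>r lies in the divisible hull sqrt(|k^x|) of the value group.\<close>
definition in_sqrt_value_group :: "('k::field \<Rightarrow> real) \<Rightarrow> real \<Rightarrow> bool" where
  "in_sqrt_value_group absv r \<longleftrightarrow> (\<exists>c m. c \<noteq> 0 \<and> m > (0::nat) \<and> r ^ m = absv c)"

text \<open>Power series in the variables T_i (i a natural number) are coefficient functions
  on multi-indices (finitely supported maps nat to nat).\<close>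

type_synonym 'k series = "(nat \<Rightarrow> nat) \<Rightarrow> 'k"

definition multi_indices :: "nat set \<Rightarrow> (nat \<Rightarrow> nat) set" where
  "multi_indices V = {\<nu>. finite {i. \<nu> i \<noteq> 0} \<and> {i. \<nu> i \<noteq> 0} \<subseteq> V}"

definition mono_rad :: "(nat \<Rightarrow> real) \<Rightarrow> (nat \<Rightarrow> nat) \<Rightarrow> real" where
  "mono_rad \<rho> \<nu> = (\<Prod>i\<in>{i. \<nu> i \<noteq> 0}. \<rho> i ^ \<nu> i)"

text \<open>k{rho^-1 T_V}: series in the variables indexed by V with |a_nu| rho^nu \<rightarrow> 0.\<close>
definition tate :: "('k::field \<Rightarrow> real) \<Rightarrow> (nat \<Rightarrow> real) \<Rightarrow> nat set \<Rightarrow> 'k series set" where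
  "tate absv \<rho> V = {a. (\<forall>\<nu>. \<nu> \<notin> multi_indices V \<longrightarrow> a \<nu> = 0) \<and>
                      (\<forall>e>0. finite {\<nu>. e \<le> absv (a \<nu>) * mono_rad \<rho> \<nu>})}"

definition gauss :: "('k::field \<Rightarrow> real) \<Rightarrow> (nat \<Rightarrow> real) \<Rightarrow> 'k series \<Rightarrow> real" where
  "gauss absv \<rho> a = Sup (range (\<lambda>\<nu>. absv (a \<nu>) * mono_rad \<rho> \<nu>))"

definition ser_zero :: "'k::field series" where "ser_zero = (\<lambda>_. 0)"

definition ser_one :: "'k::field series" where
  "ser_one = (\<lambda>\<nu>. if \<nu> = (\<lambda>_. 0) then 1 else 0)"

definition ser_var :: "nat \<Rightarrow> 'k::field series" where
  "ser_var j = (\<lambda>\<nu>. if \<nu> = (\<lambda>i. if i = j then 1 else 0) then 1 else 0)"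

definition ser_add :: "'k::field series \<Rightarrow> 'k series \<Rightarrow> 'k series" where
  "ser_add a b = (\<lambda>\<nu>. a \<nu> + b \<nu>)"

definition ser_mul :: "'k::field series \<Rightarrow> 'k series \<Rightarrow> 'k series" where
  "ser_mul a b = (\<lambda>\<nu>. \<Sum>\<alpha>\<in>{\<alpha>. \<forall>i. \<alpha> i \<le> \<nu> i}. a \<alpha> * b (\<lambda>i. \<nu> i - \<alpha> i))"

definition is_ideal :: "'k::field series set \<Rightarrow> 'k series set \<Rightarrow> bool" where
  "is_ideal A I \<longleftrightarrow> I \<subseteq> A \<and> ser_zero \<in> I \<and>
     (\<forall>f\<in>I. \<forall>g\<in>I. ser_add f g \<in> I) \<and> (\<forall>f\<in>A. \<forall>g\<in>I. ser_mul f g \<in> I)"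

text \<open>Points of M(k{rho^-1 T_V}/I): bounded multiplicative seminorms on the Tate algebra
  vanishing on I (equivalently, on the quotient). Outside the algebra a point is 0.\<close>
definition spec :: "('k::field \<Rightarrow> real) \<Rightarrow> (nat \<Rightarrow> real) \<Rightarrow> nat set \<Rightarrow> 'k series set
                     \<Rightarrow> ('k series \<Rightarrow> real) set" where
  "spec absv \<rho> V I = {x.
     (\<forall>f. f \<notin> tate absv \<rho> V \<longrightarrow> x f = 0) \<and>
     x ser_zero = 0 \<and> x ser_one = 1 \<and>
     (\<forall>f\<in>tate absv \<rho> V. 0 \<le> x f) \<and>
     (\<forall>f\<in>tate absv \<rho> V. \<forall>g\<in>tate absv \<rho> V.
         x (ser_add f g) \<le> x f + x g \<and> x (ser_mul f g) = x f * x g) \<and>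
     (\<exists>C. \<forall>f\<in>tate absv \<rho> V. x f \<le> C * gauss absv \<rho> f) \<and>
     (\<forall>f\<in>I. x f = 0)}"

text \<open>Restriction of a point to the subalgebra in the variables < N (the projection).\<close>
definition restr :: "('k::field \<Rightarrow> real) \<Rightarrow> (nat \<Rightarrow> real) \<Rightarrow> nat
                     \<Rightarrow> ('k series \<Rightarrow> real) \<Rightarrow> ('k series \<Rightarrow> real)" where
  "restr absv \<rho> N x = (\<lambda>f. if f \<in> tate absv \<rho> {..<N} then x f else 0)"

inductive_set semianalytic_sets ::
  "('k series \<Rightarrow> real) set \<Rightarrow> 'k series set \<Rightarrow> ('k series \<Rightarrow> real) set set"
  for P F where
  basic: "f \<in> F \<Longrightarrow> g \<in> F \<Longrightarrow> {x\<in>P. x f \<le> x g} \<in> semianalytic_sets P F"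
| compl: "A \<in> semianalytic_sets P F \<Longrightarrow> P - A \<in> semianalytic_sets P F"
| union: "A \<in> semianalytic_sets P F \<Longrightarrow> B \<in> semianalytic_sets P F \<Longrightarrow> A \<union> B \<in> semianalytic_sets P F"

definition semianalytic :: "('k::field \<Rightarrow> real) \<Rightarrow> (nat \<Rightarrow> real) \<Rightarrow> nat \<Rightarrow> 'k series set
                            \<Rightarrow> ('k series \<Rightarrow> real) set \<Rightarrow> bool" where
  "semianalytic absv \<rho> N I T \<longleftrightarrow>
     T \<in> semianalytic_sets (spec absv \<rho> {..<N} I) (tate absv \<rho> {..<N})"

text \<open>Z = M(k{rho^-1 T_0..T_(N-1)}/I); Z x B^m_s uses extra variables N..N+m-1 of radius s.\<close>
definition oc_subanalytic :: "('k::field \<Rightarrow> real) \<Rightarrow> (nat \<Rightarrow> real) \<Rightarrow> nat \<Rightarrow> 'k series set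
                              \<Rightarrow> ('k series \<Rightarrow> real) set \<Rightarrow> bool" where
  "oc_subanalytic absv \<rho> N I S \<longleftrightarrow>
     (\<exists>m::nat. \<exists>s::real. \<exists>T. s > 1 \<and>
        semianalytic absv (\<lambda>i. if i < N then \<rho> i else s) (N + m) I T \<and>
        S = restr absv \<rho> N ` (T \<inter> {x. \<forall>j\<in>{N..<N+m}. x (ser_var j) \<le> 1}))"

end

theory Submission
  imports Defs "HOL-Real_Asymp.Real_Asymp" "HOL-Library.FuncSet"
begin
lemma ln_lim: "(\<lambda>n. ln (real n + 1) / real n) \<longlonglongrightarrow> 0" by real_asymp

lemma power_trick:
  fixes a b K :: real and L :: nat
  assumes a0: "a \<ge> 0" and b0: "b \<ge> 0" and H: "\<forall>n\<ge>1. a^n \<le> K * (real n + 1)^L * b^n"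
  shows "a \<le> b"
proof (rule ccontr)
  assume "\<not> a \<le> b"
  hence ab: "b < a" by simp
  have H1: "a \<le> K * 2^L * b" using H[rule_format, of 1] by simp
  show False
  proof (cases "b = 0")
    case True thus ?thesis using H1 ab by simp
  next
    case False
    hence bp: "b > 0" using b0 by simp
    have Kp: "K > 0"
    proof (rule ccontr)
      assume "\<not> K > 0"
      hence "K * 2^L * b \<le> 0" using bp by (simp add: mult_nonpos_nonneg)
      thus False using H1 ab bp by simp
    qed
    have ap: "a > 0" using ab bp by simp
    have le: "ln (a/b) \<le> ln K / real n + real L * (ln (real n + 1) / real n)" if n1: "n \<ge> 1" for n
    proof -
      have "a^n \<le> K * (real n + 1)^L * b^n" using H n1 by simp
      hence "(a/b)^n \<le> K * (real n + 1)^L" using bp by (simp add: power_divide divide_le_eq)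
      hence "ln ((a/b)^n) \<le> ln (K * (real n + 1)^L)"
        using ap bp Kp by (subst ln_le_cancel_iff) auto
      hence "real n * ln (a/b) \<le> ln K + real L * ln (real n + 1)"
        using ap bp Kp by (simp add: ln_realpow ln_mult)
      hence "ln (a/b) \<le> (ln K + real L * ln (real n + 1)) / real n"
        using n1 by (simp add: le_divide_eq mult.commute)
      thus ?thesis by (simp add: add_divide_distrib)
    qed
    have lim: "(\<lambda>n. ln K / real n + real L * (ln (real n + 1) / real n)) \<longlonglongrightarrow> 0"
    proof -
      have "(\<lambda>n. ln K / real n) \<longlonglongrightarrow> 0" by real_asymp
      moreover have "(\<lambda>n. real L * (ln (real n + 1) / real n)) \<longlonglongrightarrow> real L * 0"
        by (intro tendsto_mult tendsto_const ln_lim)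
      ultimately show ?thesis using tendsto_add by fastforce
    qed
    have "ln (a/b) \<le> 0"
      by (rule LIMSEQ_le_const[OF lim]) (use le in auto)
    moreover have "ln (a/b) > 0" using ab bp by simp
    ultimately show False by simp
  qed
qed

locale nactx = fixes absv :: "'k::field \<Rightarrow> real" assumes na: "nonarch_abs absv"
begin

lemma av_nonneg: "0 \<le> absv x" using na unfolding nonarch_abs_def by blast
lemma av_zero_iff: "absv x = 0 \<longleftrightarrow> x = 0" using na unfolding nonarch_abs_def by blast
lemma av_mult: "absv (x * y) = absv x * absv y" using na unfolding nonarch_abs_def by blast
lemma av_add: "absv (x + y) \<le> max (absv x) (absv y)" using na unfolding nonarch_abs_def by blast
lemma av_0[simp]: "absv 0 = 0" using av_zero_iff by simp
lemma av_1[simp]: "absv 1 = 1"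
proof -
  have "absv 1 = absv 1 * absv 1" using av_mult[of 1 1] by simp
  moreover have "absv 1 \<noteq> 0" using av_zero_iff by simp
  ultimately show ?thesis by (metis mult_cancel_left2)
qed
lemma av_minus1: "absv (-1) = 1"
proof -
  have "absv (-1) * absv (-1) = 1" using av_mult[of "-1" "-1"] by simp
  thus ?thesis using av_nonneg[of "-1"]
    by (metis abs_of_nonneg real_sqrt_abs2 real_sqrt_one power2_eq_square)
qed
lemma av_uminus: "absv (- x) = absv x"
  using av_mult[of "-1" x] av_minus1 by simp
lemma av_diff_sym: "absv (x - y) = absv (y - x)"
  by (metis av_uminus minus_diff_eq)
lemma av_sum_le:
  assumes "finite A" "\<forall>a\<in>A. absv (h a) \<le> B" "0 \<le> B"
  shows "absv (sum h A) \<le> B"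
  using assms
proof (induction A rule: finite_induct)
  case empty thus ?case by simp
next
  case (insert a A)
  have "absv (sum h (insert a A)) = absv (h a + sum h A)" using insert by simp
  also have "\<dots> \<le> max (absv (h a)) (absv (sum h A))" by (rule av_add)
  also have "\<dots> \<le> B" using insert by simp
  finally show ?case .
qed
lemma av_diff_le: "absv (x - y) \<le> max (absv x) (absv y)"
  using av_add[of x "-y"] av_uminus[of y] by simp

end

definition ssupp :: "'k::zero series \<Rightarrow> (nat \<Rightarrow> nat) set" where "ssupp f = {\<nu>. f \<nu> \<noteq> 0}"
definition ser_sub :: "'k::field series \<Rightarrow> 'k series \<Rightarrow> 'k series" where
  "ser_sub a b = (\<lambda>\<nu>. a \<nu> - b \<nu>)"
definition smono :: "'k::field \<Rightarrow> (nat \<Rightarrow> nat) \<Rightarrow> 'k series" where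
  "smono c \<nu> = (\<lambda>\<mu>. if \<mu> = \<nu> then c else 0)"
definition trunc :: "nat \<Rightarrow> 'k::field series \<Rightarrow> 'k series" where
  "trunc M f = (\<lambda>\<nu>. if (\<forall>i. \<nu> i \<le> M) then f \<nu> else 0)"
definition box :: "nat set \<Rightarrow> nat \<Rightarrow> (nat \<Rightarrow> nat) set" where
  "box V M = {\<nu>\<in>multi_indices V. \<forall>i. \<nu> i \<le> M}"

lemma mr_eq:
  assumes "finite S" "{i. \<nu> i \<noteq> 0} \<subseteq> S"
  shows "mono_rad \<rho> \<nu> = (\<Prod>i\<in>S. \<rho> i ^ \<nu> i)"
  unfolding mono_rad_def by (rule prod.mono_neutral_left) (use assms in auto)

lemma mr_pos: "\<forall>i. 0 < \<rho> i \<Longrightarrow> 0 < mono_rad \<rho> \<nu>"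
  unfolding mono_rad_def by (intro prod_pos) auto

lemma mr_zero[simp]: "mono_rad \<rho> (\<lambda>_. 0) = 1"
  unfolding mono_rad_def by simp

lemma mr_add:
  assumes "finite {i. \<alpha> i \<noteq> 0}" "finite {i. \<beta> i \<noteq> 0}"
  shows "mono_rad \<rho> (\<lambda>i. \<alpha> i + \<beta> i) = mono_rad \<rho> \<alpha> * mono_rad \<rho> \<beta>"
proof -
  let ?S = "{i. \<alpha> i \<noteq> 0} \<union> {i. \<beta> i \<noteq> 0}"
  have f: "finite ?S" using assms by simp
  have "mono_rad \<rho> (\<lambda>i. \<alpha> i + \<beta> i) = (\<Prod>i\<in>?S. \<rho> i ^ (\<alpha> i + \<beta> i))"
    by (rule mr_eq[OF f]) auto
  also have "\<dots> = (\<Prod>i\<in>?S. \<rho> i ^ \<alpha> i) * (\<Prod>i\<in>?S. \<rho> i ^ \<beta> i)"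
    by (simp add: power_add prod.distrib)
  also have "\<dots> = mono_rad \<rho> \<alpha> * mono_rad \<rho> \<beta>"
    using mr_eq[OF f, of \<alpha> \<rho>] mr_eq[OF f, of \<beta> \<rho>] by auto
  finally show ?thesis .
qed

lemma mr_mono:
  assumes "\<forall>i. \<nu> i \<noteq> 0 \<longrightarrow> 0 < \<rho>2 i" "\<forall>i. \<nu> i \<noteq> 0 \<longrightarrow> \<rho>2 i \<le> \<rho>1 i"
  shows "mono_rad \<rho>2 \<nu> \<le> mono_rad \<rho>1 \<nu>"
  unfolding mono_rad_def
  by (rule prod_mono) (use assms in \<open>auto intro: power_mono less_imp_le\<close>)

lemma mr_ge1: "\<forall>i. 1 \<le> \<rho> i \<Longrightarrow> 1 \<le> mono_rad \<rho> \<nu>"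
  unfolding mono_rad_def by (intro prod_ge_1) auto

lemma mi_add: "\<alpha> \<in> multi_indices V \<Longrightarrow> \<beta> \<in> multi_indices V \<Longrightarrow> (\<lambda>i. \<alpha> i + \<beta> i) \<in> multi_indices V"
  unfolding multi_indices_def
  by (auto elim!: finite_subset[rotated])

lemma mi_le: "\<nu> \<in> multi_indices V \<Longrightarrow> \<forall>i. \<alpha> i \<le> \<nu> i \<Longrightarrow> \<alpha> \<in> multi_indices V"
  unfolding multi_indices_def mem_Collect_eq
proof (elim conjE, intro conjI)
  assume "\<forall>i. \<alpha> i \<le> \<nu> i" "finite {i. \<nu> i \<noteq> 0}" "{i. \<nu> i \<noteq> 0} \<subseteq> V"
  moreover have "{i. \<alpha> i \<noteq> 0} \<subseteq> {i. \<nu> i \<noteq> 0}" using calculation(1)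
    by (metis (mono_tags, lifting) Collect_mono le_zero_eq)
  ultimately show "finite {i. \<alpha> i \<noteq> 0}" "{i. \<alpha> i \<noteq> 0} \<subseteq> V" by (auto intro: finite_subset)
qed

lemma mi_diff: "\<nu> \<in> multi_indices V \<Longrightarrow> (\<lambda>i. \<nu> i - \<alpha> i) \<in> multi_indices V"
  by (rule mi_le) auto

lemma mi_finite: "\<nu> \<in> multi_indices V \<Longrightarrow> finite {i. \<nu> i \<noteq> 0}"
  unfolding multi_indices_def by auto

lemma box_sub: "box V M \<subseteq> (\<lambda>g i. if i \<in> V then g i else 0) ` (PiE V (\<lambda>_. {..M}))"
proof
  fix \<nu> assume "\<nu> \<in> box V M"
  hence a: "\<nu> \<in> multi_indices V" "\<forall>i. \<nu> i \<le> M" unfolding box_def by auto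
  have "\<nu> = (\<lambda>i. if i \<in> V then restrict \<nu> V i else 0)"
    using a unfolding multi_indices_def by (auto simp: fun_eq_iff restrict_def)
  moreover have "restrict \<nu> V \<in> PiE V (\<lambda>_. {..M})" using a by auto
  ultimately show "\<nu> \<in> (\<lambda>g i. if i \<in> V then g i else 0) ` (PiE V (\<lambda>_. {..M}))" by blast
qed

lemma box_finite: "finite V \<Longrightarrow> finite (box V M)"
  by (rule finite_subset[OF box_sub]) (auto intro: finite_PiE)

lemma box_card: "finite V \<Longrightarrow> card (box V M) \<le> (M+1) ^ card V"
proof -
  assume fV: "finite V"
  have "card (box V M) \<le> card ((\<lambda>g i. if i \<in> V then g i else 0) ` (PiE V (\<lambda>_. {..M})))"
    by (rule card_mono[OF _ box_sub]) (use fV in \<open>auto intro: finite_PiE\<close>)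
  also have "\<dots> \<le> card (PiE V (\<lambda>_. {..M}::nat set))" by (rule card_image_le) (use fV in \<open>auto intro: finite_PiE\<close>)
  also have "\<dots> = (M+1) ^ card V" using fV by (simp add: card_PiE)
  finally show ?thesis .
qed

lemma le_set_finite:
  assumes "\<nu> \<in> multi_indices V"
  shows "finite {\<alpha>. \<forall>i. \<alpha> i \<le> \<nu> i}"
proof -
  let ?S = "{i. \<nu> i \<noteq> 0}"
  have fS: "finite ?S" using assms mi_finite by blast
  have "{\<alpha>. \<forall>i. \<alpha> i \<le> \<nu> i} \<subseteq> box ?S (Max (\<nu> ` ?S))"
  proof
    fix \<alpha> assume h: "\<alpha> \<in> {\<alpha>. \<forall>i. \<alpha> i \<le> \<nu> i}"
    have "\<nu> \<in> multi_indices ?S" unfolding multi_indices_def using fS by auto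
    hence "\<alpha> \<in> multi_indices ?S" using h mi_le by blast
    moreover have "\<alpha> i \<le> Max (\<nu> ` ?S)" for i
    proof (cases "\<nu> i = 0")
      case True
      hence "\<alpha> i = 0" using h by (metis le_zero_eq mem_Collect_eq)
      thus ?thesis by simp
    next
      case False
      have "\<nu> i \<le> Max (\<nu> ` ?S)" using fS False by (intro Max_ge) auto
      moreover have "\<alpha> i \<le> \<nu> i" using h by simp
      ultimately show ?thesis by linarith
    qed
    ultimately show "\<alpha> \<in> box ?S (Max (\<nu> ` ?S))" unfolding box_def by auto
  qed
  thus ?thesis using box_finite[OF fS] finite_subset by blast
qed

locale tctx = nactx + fixes \<rho> :: "nat \<Rightarrow> real"
  assumes rpos: "\<forall>i. 0 < \<rho> i"
begin


lemma max_mul_le: "a \<le> max x y \<Longrightarrow> (0::real) < m \<Longrightarrow> a*m \<le> max (x*m) (y*m)"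
  by (auto simp: max_def mult_right_mono)

lemma tm_nonneg: "0 \<le> absv (f \<nu>) * mono_rad \<rho> \<nu>"
  using av_nonneg mr_pos[OF rpos] by (simp add: less_imp_le)

lemma tate_vanish: "f \<in> tate absv \<rho> V \<Longrightarrow> \<nu> \<notin> multi_indices V \<Longrightarrow> f \<nu> = 0"
  unfolding tate_def by auto

lemma tate_fin: "f \<in> tate absv \<rho> V \<Longrightarrow> e > 0 \<Longrightarrow> finite {\<nu>. e \<le> absv (f \<nu>) * mono_rad \<rho> \<nu>}"
  unfolding tate_def by auto

lemma tateI:
  assumes "\<And>\<nu>. \<nu> \<notin> multi_indices V \<Longrightarrow> f \<nu> = 0"
    "\<And>e. e > 0 \<Longrightarrow> finite {\<nu>. e \<le> absv (f \<nu>) * mono_rad \<rho> \<nu>}"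
  shows "f \<in> tate absv \<rho> V"
  unfolding tate_def using assms by auto

lemma tate_bdd: "f \<in> tate absv \<rho> V \<Longrightarrow> bdd_above (range (\<lambda>\<nu>. absv (f \<nu>) * mono_rad \<rho> \<nu>))"
proof -
  assume f: "f \<in> tate absv \<rho> V"
  let ?t = "\<lambda>\<nu>. absv (f \<nu>) * mono_rad \<rho> \<nu>"
  have fin: "finite {\<nu>. 1 \<le> ?t \<nu>}" using tate_fin[OF f, of 1] by simp
  have "range ?t \<subseteq> ?t ` {\<nu>. 1 \<le> ?t \<nu>} \<union> {..1}" by auto
  moreover have "bdd_above (?t ` {\<nu>. 1 \<le> ?t \<nu>} \<union> {..1})"
    using fin by (simp add: bdd_above_Un)
  ultimately show ?thesis by (rule bdd_above_mono[rotated])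
qed

lemma gauss_ge: "f \<in> tate absv \<rho> V \<Longrightarrow> absv (f \<nu>) * mono_rad \<rho> \<nu> \<le> gauss absv \<rho> f"
  unfolding gauss_def by (rule cSup_upper) (auto intro: tate_bdd)

lemma gauss_le: "(\<And>\<nu>. absv (f \<nu>) * mono_rad \<rho> \<nu> \<le> B) \<Longrightarrow> gauss absv \<rho> f \<le> B"
  unfolding gauss_def by (rule cSup_least) auto

lemma gauss_nonneg: "f \<in> tate absv \<rho> V \<Longrightarrow> 0 \<le> gauss absv \<rho> f"
  using gauss_ge tm_nonneg order_trans by blast

lemma tate_finsupp:
  assumes "finite (ssupp f)" "ssupp f \<subseteq> multi_indices V"
  shows "f \<in> tate absv \<rho> V"
proof (rule tateI)
  fix \<nu> assume "\<nu> \<notin> multi_indices V" thus "f \<nu> = 0" using assms unfolding ssupp_def by auto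
next
  fix e :: real assume e: "e > 0"
  have "{\<nu>. e \<le> absv (f \<nu>) * mono_rad \<rho> \<nu>} \<subseteq> ssupp f"
    unfolding ssupp_def using e by auto
  thus "finite {\<nu>. e \<le> absv (f \<nu>) * mono_rad \<rho> \<nu>}" using assms(1) finite_subset by blast
qed

lemma ssupp_tate: "f \<in> tate absv \<rho> V \<Longrightarrow> ssupp f \<subseteq> multi_indices V"
  unfolding ssupp_def using tate_vanish by blast

lemma add_tate:
  assumes f: "f \<in> tate absv \<rho> V" and g: "g \<in> tate absv \<rho> V"
  shows "ser_add f g \<in> tate absv \<rho> V" "gauss absv \<rho> (ser_add f g) \<le> max (gauss absv \<rho> f) (gauss absv \<rho> g)"
proof -
  have pt: "absv (ser_add f g \<nu>) * mono_rad \<rho> \<nu> \<le> max (absv (f \<nu>) * mono_rad \<rho> \<nu>) (absv (g \<nu>) * mono_rad \<rho> \<nu>)" for \<nu>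
  proof -
    have "absv (ser_add f g \<nu>) \<le> max (absv (f \<nu>)) (absv (g \<nu>))" unfolding ser_add_def by (rule av_add)
    thus ?thesis using mr_pos[OF rpos, of \<nu>] by (rule max_mul_le)
  qed
  show "ser_add f g \<in> tate absv \<rho> V"
  proof (rule tateI)
    fix \<nu> assume "\<nu> \<notin> multi_indices V" thus "ser_add f g \<nu> = 0"
      using tate_vanish[OF f] tate_vanish[OF g] by (simp add: ser_add_def)
  next
    fix e :: real assume e: "e > 0"
    have "{\<nu>. e \<le> absv (ser_add f g \<nu>) * mono_rad \<rho> \<nu>} \<subseteq> {\<nu>. e \<le> absv (f \<nu>) * mono_rad \<rho> \<nu>} \<union> {\<nu>. e \<le> absv (g \<nu>) * mono_rad \<rho> \<nu>}"
      using pt by (auto simp: le_max_iff_disj intro: order_trans)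
    thus "finite {\<nu>. e \<le> absv (ser_add f g \<nu>) * mono_rad \<rho> \<nu>}"
      using tate_fin[OF f e] tate_fin[OF g e] finite_subset by blast
  qed
  show "gauss absv \<rho> (ser_add f g) \<le> max (gauss absv \<rho> f) (gauss absv \<rho> g)"
    by (rule gauss_le) (meson gauss_ge[OF f] gauss_ge[OF g] max.mono order_trans pt)
qed

lemma sub_tate:
  assumes f: "f \<in> tate absv \<rho> V" and g: "g \<in> tate absv \<rho> V"
  shows "ser_sub f g \<in> tate absv \<rho> V" "gauss absv \<rho> (ser_sub f g) \<le> max (gauss absv \<rho> f) (gauss absv \<rho> g)"
proof -
  have pt: "absv (ser_sub f g \<nu>) * mono_rad \<rho> \<nu> \<le> max (absv (f \<nu>) * mono_rad \<rho> \<nu>) (absv (g \<nu>) * mono_rad \<rho> \<nu>)" for \<nu>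
  proof -
    have "absv (ser_sub f g \<nu>) \<le> max (absv (f \<nu>)) (absv (g \<nu>))" unfolding ser_sub_def by (rule av_diff_le)
    thus ?thesis using mr_pos[OF rpos, of \<nu>] by (rule max_mul_le)
  qed
  show "ser_sub f g \<in> tate absv \<rho> V"
  proof (rule tateI)
    fix \<nu> assume "\<nu> \<notin> multi_indices V" thus "ser_sub f g \<nu> = 0"
      using tate_vanish[OF f] tate_vanish[OF g] by (simp add: ser_sub_def)
  next
    fix e :: real assume e: "e > 0"
    have "{\<nu>. e \<le> absv (ser_sub f g \<nu>) * mono_rad \<rho> \<nu>} \<subseteq> {\<nu>. e \<le> absv (f \<nu>) * mono_rad \<rho> \<nu>} \<union> {\<nu>. e \<le> absv (g \<nu>) * mono_rad \<rho> \<nu>}"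
      using pt by (auto simp: le_max_iff_disj intro: order_trans)
    thus "finite {\<nu>. e \<le> absv (ser_sub f g \<nu>) * mono_rad \<rho> \<nu>}"
      using tate_fin[OF f e] tate_fin[OF g e] finite_subset by blast
  qed
  show "gauss absv \<rho> (ser_sub f g) \<le> max (gauss absv \<rho> f) (gauss absv \<rho> g)"
    by (rule gauss_le) (meson gauss_ge[OF f] gauss_ge[OF g] max.mono order_trans pt)
qed

lemma gauss_sub_sym: "gauss absv \<rho> (ser_sub f g) = gauss absv \<rho> (ser_sub g f)"
  unfolding gauss_def ser_sub_def using av_diff_sym by simp

lemma gauss_mono_pt:
  assumes g: "g \<in> tate absv \<rho> V" and le: "\<And>\<nu>. absv (f \<nu>) \<le> absv (g \<nu>)"
  shows "gauss absv \<rho> f \<le> gauss absv \<rho> g"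
proof (rule gauss_le)
  fix \<nu>
  have "absv (f \<nu>) * mono_rad \<rho> \<nu> \<le> absv (g \<nu>) * mono_rad \<rho> \<nu>"
    using le mr_pos[OF rpos, of \<nu>] by (simp add: mult_right_mono)
  thus "absv (f \<nu>) * mono_rad \<rho> \<nu> \<le> gauss absv \<rho> g" using gauss_ge[OF g] order_trans by blast
qed

lemma smono_tate: "\<nu> \<in> multi_indices V \<Longrightarrow> smono c \<nu> \<in> tate absv \<rho> V"
  by (rule tate_finsupp) (auto simp: ssupp_def smono_def intro: finite_subset[of _ "{\<nu>}"])

lemma gauss_mono_eq:
  assumes "\<nu> \<in> multi_indices V"
  shows "gauss absv \<rho> (smono c \<nu>) = absv c * mono_rad \<rho> \<nu>"
proof (rule antisym)
  show "gauss absv \<rho> (smono c \<nu>) \<le> absv c * mono_rad \<rho> \<nu>"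
    by (rule gauss_le) (use tm_nonneg[of "\<lambda>_. c" \<nu>] in \<open>auto simp: smono_def\<close>)
  show "absv c * mono_rad \<rho> \<nu> \<le> gauss absv \<rho> (smono c \<nu>)"
    using gauss_ge[OF smono_tate[OF assms], of c \<nu>] by (simp add: smono_def)
qed

lemma trunc_tate:
  assumes f: "f \<in> tate absv \<rho> V" and fV: "finite V"
  shows "trunc M f \<in> tate absv \<rho> V" "ssupp (trunc M f) \<subseteq> box V M" "finite (ssupp (trunc M f))"
proof -
  show b: "ssupp (trunc M f) \<subseteq> box V M"
    unfolding ssupp_def trunc_def box_def using tate_vanish[OF f] by auto
  thus fs: "finite (ssupp (trunc M f))" using box_finite[OF fV] finite_subset by blast
  show "trunc M f \<in> tate absv \<rho> V"
    by (rule tate_finsupp[OF fs]) (use b in \<open>auto simp: box_def\<close>)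
qed

lemma zero_tate: "ser_zero \<in> tate absv \<rho> V"
  by (rule tate_finsupp) (auto simp: ssupp_def ser_zero_def)

lemma one_eq: "ser_one = smono 1 (\<lambda>_. 0)" unfolding ser_one_def smono_def by simp
lemma var_eq: "ser_var j = smono 1 (\<lambda>i. if i = j then 1 else 0)" unfolding ser_var_def smono_def by simp

lemma zero_mi: "(\<lambda>_. 0) \<in> multi_indices V" unfolding multi_indices_def by simp
lemma ej_mi: "j \<in> V \<Longrightarrow> (\<lambda>i. if i = j then 1 else 0) \<in> multi_indices V"
  unfolding multi_indices_def by (auto intro: finite_subset[of _ "{j}"])

lemma one_tate: "ser_one \<in> tate absv \<rho> V" unfolding one_eq by (rule smono_tate[OF zero_mi])
lemma var_tate: "j \<in> V \<Longrightarrow> ser_var j \<in> tate absv \<rho> V" unfolding var_eq by (rule smono_tate[OF ej_mi])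

lemma gauss_one: "gauss absv \<rho> ser_one = 1"
  unfolding one_eq by (subst gauss_mono_eq[OF zero_mi]) (simp add: av_1)

end

lemma mul_smono:
  assumes "finite {i. \<alpha> i \<noteq> 0}" "finite {i. \<beta> i \<noteq> 0}"
  shows "ser_mul (smono a \<alpha>) (smono b \<beta>) = smono (a*b) (\<lambda>i. \<alpha> i + \<beta> i)"
proof
  fix \<mu>
  show "ser_mul (smono a \<alpha>) (smono b \<beta>) \<mu> = smono (a*b) (\<lambda>i. \<alpha> i + \<beta> i) \<mu>"
  proof (cases "\<mu> = (\<lambda>i. \<alpha> i + \<beta> i)")
    case True
    have fin: "finite {\<gamma>. \<forall>i. \<gamma> i \<le> \<mu> i}"
    proof (rule le_set_finite)
      show "\<mu> \<in> multi_indices ({i. \<alpha> i \<noteq> 0} \<union> {i. \<beta> i \<noteq> 0})"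
        unfolding multi_indices_def True using assms by (auto intro: finite_subset[rotated])
    qed
    have "ser_mul (smono a \<alpha>) (smono b \<beta>) \<mu> =
      (\<Sum>\<gamma>\<in>{\<gamma>. \<forall>i. \<gamma> i \<le> \<mu> i}. if \<gamma> = \<alpha> then a * b else 0)"
      unfolding ser_mul_def smono_def
      by (rule sum.cong) (auto simp: True fun_eq_iff)
    also have "\<dots> = a * b" using fin by (simp add: True)
    finally show ?thesis by (simp add: smono_def True)
  next
    case False
    have "ser_mul (smono a \<alpha>) (smono b \<beta>) \<mu> = (\<Sum>\<gamma>\<in>{\<gamma>. \<forall>i. \<gamma> i \<le> \<mu> i}. 0)"
      unfolding ser_mul_def smono_def
    proof (rule sum.cong)
      fix \<gamma> assume g: "\<gamma> \<in> {\<gamma>. \<forall>i. \<gamma> i \<le> \<mu> i}"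
      have "\<not> (\<gamma> = \<alpha> \<and> (\<lambda>i. \<mu> i - \<gamma> i) = \<beta>)"
      proof
        assume "\<gamma> = \<alpha> \<and> (\<lambda>i. \<mu> i - \<gamma> i) = \<beta>"
        hence "\<mu> = (\<lambda>i. \<alpha> i + \<beta> i)" using g by (simp add: fun_eq_iff) (metis le_add_diff_inverse)
        thus False using False by simp
      qed
      thus "(if \<gamma> = \<alpha> then a else 0) * (if (\<lambda>i. \<mu> i - \<gamma> i) = \<beta> then b else 0) = 0" by auto
    qed simp
    thus ?thesis using False by (simp add: smono_def)
  qed
qed

lemma bilin:
  "ser_sub (ser_mul f g) (ser_mul p q) = ser_add (ser_mul (ser_sub f p) g) (ser_mul p (ser_sub g q))"
  unfolding ser_sub_def ser_add_def ser_mul_def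
  by (simp add: fun_eq_iff sum.distrib[symmetric] sum_subtractf[symmetric] algebra_simps)

context nactx
begin
lemma av_sum_less:
  assumes "finite A" "\<forall>a\<in>A. absv (h a) < B" "0 < B"
  shows "absv (sum h A) < B"
  using assms
proof (induction A rule: finite_induct)
  case empty thus ?case using av_0 by simp
next
  case (insert a A)
  have "absv (sum h (insert a A)) = absv (h a + sum h A)" using insert by simp
  also have "\<dots> \<le> max (absv (h a)) (absv (sum h A))" by (rule av_add)
  also have "\<dots> < B" using insert by simp
  finally show ?case .
qed

end

context tctx
begin

lemma mul_vanish:
  assumes f: "f \<in> tate absv \<rho> V" and g: "g \<in> tate absv \<rho> V" and nu: "\<nu> \<notin> multi_indices V"
  shows "ser_mul f g \<nu> = 0"
  unfolding ser_mul_def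
proof (rule sum.neutral, intro ballI)
  fix \<alpha> assume a: "\<alpha> \<in> {\<alpha>. \<forall>i. \<alpha> i \<le> \<nu> i}"
  show "f \<alpha> * g (\<lambda>i. \<nu> i - \<alpha> i) = 0"
  proof (rule ccontr)
    assume "f \<alpha> * g (\<lambda>i. \<nu> i - \<alpha> i) \<noteq> 0"
    hence "\<alpha> \<in> multi_indices V" "(\<lambda>i. \<nu> i - \<alpha> i) \<in> multi_indices V"
      using tate_vanish[OF f] tate_vanish[OF g] by auto
    hence "(\<lambda>i. \<alpha> i + (\<nu> i - \<alpha> i)) \<in> multi_indices V" by (rule mi_add)
    moreover have "(\<lambda>i. \<alpha> i + (\<nu> i - \<alpha> i)) = \<nu>" using a by (auto simp: fun_eq_iff)
    ultimately show False using nu by simp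
  qed
qed

lemma mul_term:
  assumes f: "f \<in> tate absv \<rho> V" and g: "g \<in> tate absv \<rho> V" and nu: "\<nu> \<in> multi_indices V"
    and a: "\<forall>i. \<alpha> i \<le> \<nu> i"
  shows "absv (f \<alpha> * g (\<lambda>i. \<nu> i - \<alpha> i)) * mono_rad \<rho> \<nu> =
    (absv (f \<alpha>) * mono_rad \<rho> \<alpha>) * (absv (g (\<lambda>i. \<nu> i - \<alpha> i)) * mono_rad \<rho> (\<lambda>i. \<nu> i - \<alpha> i))"
proof -
  have "\<alpha> \<in> multi_indices V" using mi_le nu a by blast
  moreover have "(\<lambda>i. \<nu> i - \<alpha> i) \<in> multi_indices V" using mi_diff nu by blast
  ultimately have "mono_rad \<rho> (\<lambda>i. \<alpha> i + (\<nu> i - \<alpha> i)) = mono_rad \<rho> \<alpha> * mono_rad \<rho> (\<lambda>i. \<nu> i - \<alpha> i)"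
    by (intro mr_add) (auto dest: mi_finite)
  moreover have "(\<lambda>i. \<alpha> i + (\<nu> i - \<alpha> i)) = \<nu>" using a by (auto simp: fun_eq_iff)
  ultimately show ?thesis by (simp add: av_mult mult_ac)
qed

lemma mul_tm_bound:
  assumes f: "f \<in> tate absv \<rho> V" and g: "g \<in> tate absv \<rho> V"
  shows "absv (ser_mul f g \<nu>) * mono_rad \<rho> \<nu> \<le> gauss absv \<rho> f * gauss absv \<rho> g"
proof (cases "\<nu> \<in> multi_indices V")
  case False thus ?thesis using mul_vanish[OF f g False] gauss_nonneg[OF f] gauss_nonneg[OF g] by simp
next
  case True
  have mp: "0 < mono_rad \<rho> \<nu>" by (rule mr_pos[OF rpos])
  have "absv (ser_mul f g \<nu>) \<le> gauss absv \<rho> f * gauss absv \<rho> g / mono_rad \<rho> \<nu>"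
    unfolding ser_mul_def
  proof (rule av_sum_le[OF le_set_finite[OF True]], intro ballI)
    fix \<alpha> assume a: "\<alpha> \<in> {\<alpha>. \<forall>i. \<alpha> i \<le> \<nu> i}"
    have "absv (f \<alpha> * g (\<lambda>i. \<nu> i - \<alpha> i)) * mono_rad \<rho> \<nu> =
      (absv (f \<alpha>) * mono_rad \<rho> \<alpha>) * (absv (g (\<lambda>i. \<nu> i - \<alpha> i)) * mono_rad \<rho> (\<lambda>i. \<nu> i - \<alpha> i))"
      using mul_term[OF f g True] a by simp
    also have "\<dots> \<le> gauss absv \<rho> f * gauss absv \<rho> g"
      by (rule mult_mono) (auto intro: gauss_ge[OF f] gauss_ge[OF g] gauss_nonneg[OF f] tm_nonneg)
    finally have "absv (f \<alpha> * g (\<lambda>i. \<nu> i - \<alpha> i)) * mono_rad \<rho> \<nu> \<le> gauss absv \<rho> f * gauss absv \<rho> g" .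
    thus "absv (f \<alpha> * g (\<lambda>i. \<nu> i - \<alpha> i)) \<le> gauss absv \<rho> f * gauss absv \<rho> g / mono_rad \<rho> \<nu>"
      using mp by (simp add: le_divide_eq)
  next
    show "0 \<le> gauss absv \<rho> f * gauss absv \<rho> g / mono_rad \<rho> \<nu>"
      using mp gauss_nonneg[OF f] gauss_nonneg[OF g] by simp
  qed
  thus ?thesis using mp by (simp add: le_divide_eq)
qed

lemma gauss_mul:
  assumes f: "f \<in> tate absv \<rho> V" and g: "g \<in> tate absv \<rho> V"
  shows "gauss absv \<rho> (ser_mul f g) \<le> gauss absv \<rho> f * gauss absv \<rho> g"
  by (rule gauss_le) (rule mul_tm_bound[OF f g])

lemma mul_tate:
  assumes f: "f \<in> tate absv \<rho> V" and g: "g \<in> tate absv \<rho> V"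
  shows "ser_mul f g \<in> tate absv \<rho> V"
proof (rule tateI)
  fix \<nu> assume "\<nu> \<notin> multi_indices V" thus "ser_mul f g \<nu> = 0" by (rule mul_vanish[OF f g])
next
  fix e :: real assume e: "e > 0"
  let ?F = "gauss absv \<rho> f" and ?G = "gauss absv \<rho> g"
  let ?S = "{\<nu>. e \<le> absv (ser_mul f g \<nu>) * mono_rad \<rho> \<nu>}"
  show "finite ?S"
  proof (cases "?F = 0 \<or> ?G = 0")
    case True
    have h: "absv (ser_mul f g \<nu>) * mono_rad \<rho> \<nu> \<le> 0" for \<nu>
      using mul_tm_bound[OF f g, of \<nu>] True by auto
    have "?S = {}"
    proof (rule ccontr)
      assume "?S \<noteq> {}"
      then obtain \<nu> where "e \<le> absv (ser_mul f g \<nu>) * mono_rad \<rho> \<nu>" by auto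
      thus False using h[of \<nu>] e by linarith
    qed
    thus ?thesis by simp
  next
    case False
    hence F: "?F > 0" and G: "?G > 0" using gauss_nonneg[OF f] gauss_nonneg[OF g] by auto
    let ?A = "{\<alpha>. e / ?G \<le> absv (f \<alpha>) * mono_rad \<rho> \<alpha>}" and ?B = "{\<beta>. e / ?F \<le> absv (g \<beta>) * mono_rad \<rho> \<beta>}"
    have fA: "finite ?A" using tate_fin[OF f] e G by simp
    have fB: "finite ?B" using tate_fin[OF g] e F by simp
    have "?S \<subseteq> (\<lambda>(\<alpha>,\<beta>). (\<lambda>i. \<alpha> i + \<beta> i)) ` (?A \<times> ?B)"
    proof
      fix \<nu> assume nS: "\<nu> \<in> ?S"
      have nu: "\<nu> \<in> multi_indices V"
        using nS mul_vanish[OF f g, of \<nu>] e by (cases "\<nu> \<in> multi_indices V") auto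
      have "\<exists>\<alpha>. (\<forall>i. \<alpha> i \<le> \<nu> i) \<and> \<alpha> \<in> ?A \<and> (\<lambda>i. \<nu> i - \<alpha> i) \<in> ?B"
      proof (rule ccontr)
        assume nex: "\<not> ?thesis"
        have "absv (ser_mul f g \<nu>) < e / mono_rad \<rho> \<nu>"
          unfolding ser_mul_def
        proof (rule av_sum_less[OF le_set_finite[OF nu]], intro ballI)
          fix \<alpha> assume a: "\<alpha> \<in> {\<alpha>. \<forall>i. \<alpha> i \<le> \<nu> i}"
          let ?x = "absv (f \<alpha>) * mono_rad \<rho> \<alpha>" and ?y = "absv (g (\<lambda>i. \<nu> i - \<alpha> i)) * mono_rad \<rho> (\<lambda>i. \<nu> i - \<alpha> i)"
          have x0: "0 \<le> ?x" and y0: "0 \<le> ?y" by (rule tm_nonneg)+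
          have xF: "?x \<le> ?F" and yG: "?y \<le> ?G" by (rule gauss_ge[OF f], rule gauss_ge[OF g])
          have "\<not> (e / ?G \<le> ?x \<and> e / ?F \<le> ?y)" using nex a by blast
          hence "?x < e / ?G \<or> ?y < e / ?F" by linarith
          hence "?x * ?y < e"
          proof
            assume "?x < e / ?G"
            hence "?x * ?G < e" using G by (simp add: less_divide_eq)
            moreover have "?x * ?y \<le> ?x * ?G" using yG x0 by (rule mult_left_mono)
            ultimately show ?thesis by simp
          next
            assume "?y < e / ?F"
            hence "?y * ?F < e" using F by (simp add: less_divide_eq)
            moreover have "?x * ?y \<le> ?F * ?y" using xF y0 by (rule mult_right_mono)
            ultimately show ?thesis by (simp add: mult.commute)
          qed
          hence "absv (f \<alpha> * g (\<lambda>i. \<nu> i - \<alpha> i)) * mono_rad \<rho> \<nu> < e"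
            using mul_term[OF f g nu] a by simp
          thus "absv (f \<alpha> * g (\<lambda>i. \<nu> i - \<alpha> i)) < e / mono_rad \<rho> \<nu>"
            using mr_pos[OF rpos, of \<nu>] by (simp add: less_divide_eq)
        qed (use e mr_pos[OF rpos, of \<nu>] in simp)
        thus False using nS mr_pos[OF rpos, of \<nu>] by (simp add: less_divide_eq)
      qed
      then obtain \<alpha> where a: "\<forall>i. \<alpha> i \<le> \<nu> i" "\<alpha> \<in> ?A" "(\<lambda>i. \<nu> i - \<alpha> i) \<in> ?B" by blast
      have "\<nu> = (\<lambda>(\<alpha>,\<beta>). (\<lambda>i. \<alpha> i + \<beta> i)) (\<alpha>, (\<lambda>i. \<nu> i - \<alpha> i))" using a(1) by (auto simp: fun_eq_iff)
      moreover have "(\<alpha>, (\<lambda>i. \<nu> i - \<alpha> i)) \<in> ?A \<times> ?B" using a(2,3) by blast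
      ultimately show "\<nu> \<in> (\<lambda>(\<alpha>,\<beta>). (\<lambda>i. \<alpha> i + \<beta> i)) ` (?A \<times> ?B)" by (rule image_eqI)
    qed
    thus ?thesis using fA fB finite_subset by blast
  qed
qed

lemma mul_box:
  assumes f: "f \<in> tate absv \<rho> V" and g: "g \<in> tate absv \<rho> V"
    and bf: "ssupp f \<subseteq> box V D1" and bg: "ssupp g \<subseteq> box V D2"
  shows "ssupp (ser_mul f g) \<subseteq> box V (D1 + D2)"
proof
  fix \<nu> assume n: "\<nu> \<in> ssupp (ser_mul f g)"
  hence nu: "\<nu> \<in> multi_indices V" using mul_vanish[OF f g] unfolding ssupp_def by blast
  have "\<exists>\<alpha>. (\<forall>i. \<alpha> i \<le> \<nu> i) \<and> f \<alpha> * g (\<lambda>i. \<nu> i - \<alpha> i) \<noteq> 0"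
  proof (rule ccontr)
    assume "\<not> ?thesis"
    hence "ser_mul f g \<nu> = 0" unfolding ser_mul_def by (intro sum.neutral) auto
    thus False using n unfolding ssupp_def by simp
  qed
  then obtain \<alpha> where a: "\<forall>i. \<alpha> i \<le> \<nu> i" "f \<alpha> \<noteq> 0" "g (\<lambda>i. \<nu> i - \<alpha> i) \<noteq> 0" by auto
  have "\<alpha> i \<le> D1" "\<nu> i - \<alpha> i \<le> D2" for i
    using bf bg a(2,3) unfolding ssupp_def box_def by auto
  hence "\<nu> i \<le> D1 + D2" for i using a(1) by (metis add_le_mono le_add_diff_inverse)
  thus "\<nu> \<in> box V (D1 + D2)" using nu unfolding box_def by auto
qed

end

context tctx begin

lemma trunc_conv:
  assumes f: "f \<in> tate absv \<rho> V" and e: "e > 0"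
  shows "\<exists>M0. \<forall>M\<ge>M0. gauss absv \<rho> (ser_sub f (trunc M f)) \<le> e"
proof -
  let ?A = "{\<nu>. e \<le> absv (f \<nu>) * mono_rad \<rho> \<nu>}"
  have fA: "finite ?A" by (rule tate_fin[OF f e])
  let ?b = "\<lambda>\<nu>::nat\<Rightarrow>nat. \<Sum>j\<in>{j. \<nu> j \<noteq> 0}. \<nu> j"
  define M0 where "M0 = (\<Sum>\<nu>\<in>?A. ?b \<nu>)"
  have inA: "\<nu> i \<le> M0" if "\<nu> \<in> ?A" for \<nu> i
  proof -
    have "f \<nu> \<noteq> 0" using that e by (auto simp: not_le)
    hence "\<nu> \<in> multi_indices V" using tate_vanish[OF f] by blast
    hence fs: "finite {j. \<nu> j \<noteq> 0}" by (rule mi_finite)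
    have "\<nu> i \<le> ?b \<nu>"
    proof (cases "\<nu> i = 0")
      case False thus ?thesis by (intro member_le_sum) (use fs in auto)
    qed simp
    also have "?b \<nu> \<le> M0" unfolding M0_def by (rule member_le_sum[OF that _ fA]) simp
    finally show ?thesis .
  qed
  have "gauss absv \<rho> (ser_sub f (trunc M f)) \<le> e" if M: "M \<ge> M0" for M
  proof (rule gauss_le)
    fix \<nu>
    show "absv (ser_sub f (trunc M f) \<nu>) * mono_rad \<rho> \<nu> \<le> e"
    proof (cases "\<forall>i. \<nu> i \<le> M")
      case True thus ?thesis using e by (simp add: ser_sub_def trunc_def)
    next
      case False
      hence "\<nu> \<notin> ?A" using inA M by (meson le_trans)
      thus ?thesis using False by (auto simp: ser_sub_def trunc_def)
    qed
  qed
  thus ?thesis by blast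
qed

lemma trunc_conv_lim:
  assumes f: "f \<in> tate absv \<rho> V" and fV: "finite V"
  shows "(\<lambda>M. gauss absv \<rho> (ser_sub f (trunc M f))) \<longlonglongrightarrow> 0"
proof (rule LIMSEQ_I)
  fix r :: real assume r: "0 < r"
  obtain M0 where M0: "\<forall>M\<ge>M0. gauss absv \<rho> (ser_sub f (trunc M f)) \<le> r/2"
    using trunc_conv[OF f, of "r/2"] r by auto
  have "norm (gauss absv \<rho> (ser_sub f (trunc M f)) - 0) < r" if "M \<ge> M0" for M
  proof -
    have "ser_sub f (trunc M f) \<in> tate absv \<rho> V" by (intro sub_tate f trunc_tate fV)
    hence "0 \<le> gauss absv \<rho> (ser_sub f (trunc M f))" by (rule gauss_nonneg)
    thus ?thesis using M0 that r by auto
  qed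
  thus "\<exists>no. \<forall>n\<ge>no. norm (gauss absv \<rho> (ser_sub f (trunc n f)) - 0) < r" by blast
qed

end

context nactx begin

lemma tate_mono:
  assumes p2: "\<forall>i\<in>V1. 0 < \<rho>2 i" and V: "V1 \<subseteq> V2" and le: "\<forall>i\<in>V1. \<rho>2 i \<le> \<rho>1 i"
  shows "tate absv \<rho>1 V1 \<subseteq> tate absv \<rho>2 V2"
proof
  fix f assume f: "f \<in> tate absv \<rho>1 V1"
  have mi: "multi_indices V1 \<subseteq> multi_indices V2" using V unfolding multi_indices_def by auto
  have van: "f \<nu> = 0" if "\<nu> \<notin> multi_indices V1" for \<nu> using f that unfolding tate_def by auto
  show "f \<in> tate absv \<rho>2 V2" unfolding tate_def
  proof (intro CollectI conjI allI impI)
    fix \<nu> assume "\<nu> \<notin> multi_indices V2" thus "f \<nu> = 0" using van mi by blast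
  next
    fix e :: real assume e: "e > 0"
    have "{\<nu>. e \<le> absv (f \<nu>) * mono_rad \<rho>2 \<nu>} \<subseteq> {\<nu>. e \<le> absv (f \<nu>) * mono_rad \<rho>1 \<nu>}"
    proof
      fix \<nu> assume "\<nu> \<in> {\<nu>. e \<le> absv (f \<nu>) * mono_rad \<rho>2 \<nu>}"
      hence h: "e \<le> absv (f \<nu>) * mono_rad \<rho>2 \<nu>" by simp
      hence "f \<nu> \<noteq> 0" using e by (auto simp: not_le)
      hence "\<nu> \<in> multi_indices V1" using van by blast
      hence "mono_rad \<rho>2 \<nu> \<le> mono_rad \<rho>1 \<nu>"
        using le p2 by (intro mr_mono) (auto simp: multi_indices_def)
      hence "absv (f \<nu>) * mono_rad \<rho>2 \<nu> \<le> absv (f \<nu>) * mono_rad \<rho>1 \<nu>"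
        using av_nonneg by (simp add: mult_left_mono)
      thus "\<nu> \<in> {\<nu>. e \<le> absv (f \<nu>) * mono_rad \<rho>1 \<nu>}" using h by simp
    qed
    moreover have "finite {\<nu>. e \<le> absv (f \<nu>) * mono_rad \<rho>1 \<nu>}" using f e unfolding tate_def by auto
    ultimately show "finite {\<nu>. e \<le> absv (f \<nu>) * mono_rad \<rho>2 \<nu>}" by (rule finite_subset)
  qed
qed

lemma gauss_radius_mono:
  assumes p1: "\<forall>i. 0 < \<rho>1 i" and p2: "\<forall>i. 0 < \<rho>2 i"
    and f: "f \<in> tate absv \<rho>1 V" and le: "\<forall>i\<in>V. \<rho>2 i \<le> \<rho>1 i"
  shows "gauss absv \<rho>2 f \<le> gauss absv \<rho>1 f"
proof -
  interpret t1: tctx absv \<rho>1 by unfold_locales (rule p1)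
  interpret t2: tctx absv \<rho>2 by unfold_locales (rule p2)
  show ?thesis
  proof (rule t2.gauss_le)
    fix \<nu>
    show "absv (f \<nu>) * mono_rad \<rho>2 \<nu> \<le> gauss absv \<rho>1 f"
    proof (cases "\<nu> \<in> multi_indices V")
      case True
      hence "mono_rad \<rho>2 \<nu> \<le> mono_rad \<rho>1 \<nu>"
        using le p2 by (intro mr_mono) (auto simp: multi_indices_def)
      hence "absv (f \<nu>) * mono_rad \<rho>2 \<nu> \<le> absv (f \<nu>) * mono_rad \<rho>1 \<nu>"
        using av_nonneg by (simp add: mult_left_mono)
      thus ?thesis using t1.gauss_ge[OF f] by (rule order_trans)
    next
      case False thus ?thesis using t1.tate_vanish[OF f False] t1.gauss_nonneg[OF f] by simp
    qed
  qed
qed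

end

definition spow :: "'k::field series \<Rightarrow> nat \<Rightarrow> 'k series" where
  "spow p n = (ser_mul p ^^ n) ser_one"

definition ispoly :: "nat set \<Rightarrow> 'k::zero series \<Rightarrow> bool" where
  "ispoly V p \<longleftrightarrow> finite (ssupp p) \<and> ssupp p \<subseteq> multi_indices V"

lemma poly_box:
  assumes "ispoly V p" shows "\<exists>D. ssupp p \<subseteq> box V D"
proof -
  let ?A = "ssupp p"
  have fA: "finite ?A" and sA: "?A \<subseteq> multi_indices V" using assms unfolding ispoly_def by auto
  let ?b = "\<lambda>\<nu>::nat\<Rightarrow>nat. \<Sum>j\<in>{j. \<nu> j \<noteq> 0}. \<nu> j"
  define M0 where "M0 = (\<Sum>\<nu>\<in>?A. ?b \<nu>)"
  have inA: "\<nu> i \<le> M0" if "\<nu> \<in> ?A" for \<nu> i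
  proof -
    have "\<nu> \<in> multi_indices V" using that sA by blast
    hence fs: "finite {j. \<nu> j \<noteq> 0}" by (rule mi_finite)
    have "\<nu> i \<le> ?b \<nu>"
    proof (cases "\<nu> i = 0")
      case False thus ?thesis by (intro member_le_sum) (use fs in auto)
    qed simp
    also have "?b \<nu> \<le> M0" unfolding M0_def by (rule member_le_sum[OF that _ fA]) simp
    finally show ?thesis .
  qed
  have "?A \<subseteq> box V M0" unfolding box_def using inA sA by auto
  thus ?thesis by blast
qed

lemma box_poly: "finite V \<Longrightarrow> ssupp p \<subseteq> box V D \<Longrightarrow> ispoly V p"
  unfolding ispoly_def box_def using box_finite[of V D] unfolding box_def
  by (auto intro: finite_subset)

lemma var_eq_g: "ser_var j = smono 1 (\<lambda>i. if i = j then 1 else 0)"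
  unfolding ser_var_def smono_def by simp

lemma smono_ej_suc: "smono (1::'k::field) (\<lambda>i. if i = j then Suc n else 0) =
   ser_mul (smono 1 (\<lambda>i. if i = j then n else 0)) (ser_var j)"
proof -
  have "ser_mul (smono (1::'k) (\<lambda>i. if i = j then n else 0)) (smono 1 (\<lambda>i. if i = j then 1 else 0))
     = smono (1*1) (\<lambda>i. (if i = j then n else 0) + (if i = j then 1 else 0))"
    by (rule mul_smono) (auto intro: finite_subset[of _ "{j}"])
  moreover have "(\<lambda>i. (if i = j then n else 0) + (if i = j then 1 else 0)) = (\<lambda>i. if i = j then Suc n else 0)"
    by auto
  ultimately show ?thesis by (simp add: var_eq_g)
qed

context tctx begin

lemma poly_tate: "ispoly V p \<Longrightarrow> p \<in> tate absv \<rho> V"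
  unfolding ispoly_def by (auto intro: tate_finsupp)

lemma spec_out: "y \<in> spec absv \<rho> V I \<Longrightarrow> f \<notin> tate absv \<rho> V \<Longrightarrow> y f = 0"
  unfolding spec_def by auto
lemma spec_zero: "y \<in> spec absv \<rho> V I \<Longrightarrow> y ser_zero = 0"
  unfolding spec_def by auto
lemma spec_one: "y \<in> spec absv \<rho> V I \<Longrightarrow> y ser_one = 1"
  unfolding spec_def by auto
lemma spec_nonneg: "y \<in> spec absv \<rho> V I \<Longrightarrow> 0 \<le> y f"
  unfolding spec_def by (cases "f \<in> tate absv \<rho> V") auto
lemma spec_add: "y \<in> spec absv \<rho> V I \<Longrightarrow> f \<in> tate absv \<rho> V \<Longrightarrow> g \<in> tate absv \<rho> V \<Longrightarrow>
   y (ser_add f g) \<le> y f + y g"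
  unfolding spec_def by auto
lemma spec_mul: "y \<in> spec absv \<rho> V I \<Longrightarrow> f \<in> tate absv \<rho> V \<Longrightarrow> g \<in> tate absv \<rho> V \<Longrightarrow>
   y (ser_mul f g) = y f * y g"
  unfolding spec_def by auto
lemma spec_bdd: "y \<in> spec absv \<rho> V I \<Longrightarrow> \<exists>C. \<forall>f\<in>tate absv \<rho> V. y f \<le> C * gauss absv \<rho> f"
  unfolding spec_def by auto
lemma spec_I: "y \<in> spec absv \<rho> V I \<Longrightarrow> f \<in> I \<Longrightarrow> y f = 0"
  unfolding spec_def by auto

lemma ej_pow:
  assumes y: "y \<in> spec absv \<rho> V I" and j: "j \<in> V"
  shows "y (smono 1 (\<lambda>i. if i = j then n else 0)) = y (ser_var j) ^ n"
proof (induction n)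
  case 0
  have "(\<lambda>i. if i = j then 0::nat else 0) = (\<lambda>_. 0)" by auto
  thus ?case using spec_one[OF y] by (simp add: one_eq)
next
  case (Suc n)
  have "y (smono 1 (\<lambda>i. if i = j then Suc n else 0)) =
      y (ser_mul (smono 1 (\<lambda>i. if i = j then n else 0)) (smono 1 (\<lambda>i. if i = j then 1 else 0)))"
    by (simp add: smono_ej_suc var_eq_g)
  also have "\<dots> = y (smono 1 (\<lambda>i. if i = j then n else 0)) * y (ser_var j)"
    unfolding var_eq
    by (rule spec_mul[OF y]; rule smono_tate) (use j in \<open>auto simp: multi_indices_def intro: finite_subset[of _ "{j}"]\<close>)
  finally show ?case using Suc by simp
qed

lemma var_le_radius:
  assumes y: "y \<in> spec absv \<rho> V I" and j: "j \<in> V"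
  shows "y (ser_var j) \<le> \<rho> j"
proof -
  obtain C where C: "\<forall>f\<in>tate absv \<rho> V. y f \<le> C * gauss absv \<rho> f" using spec_bdd[OF y] by blast
  have "y (ser_var j) ^ n \<le> C * (real n + 1) ^ 0 * \<rho> j ^ n" if "n \<ge> 1" for n
  proof -
    have mi: "(\<lambda>i. if i = j then n else 0) \<in> multi_indices V"
      using j by (auto simp: multi_indices_def intro: finite_subset[of _ "{j}"])
    have "y (ser_var j) ^ n = y (smono 1 (\<lambda>i. if i = j then n else 0))" using ej_pow[OF y j] by simp
    also have "\<dots> \<le> C * gauss absv \<rho> (smono 1 (\<lambda>i. if i = j then n else 0))"
      by (rule C[rule_format, OF smono_tate[OF mi]])
    also have "gauss absv \<rho> (smono 1 (\<lambda>i. if i = j then n else 0)) = \<rho> j ^ n"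
    proof -
      have "mono_rad \<rho> (\<lambda>i. if i = j then n else 0) = (\<Prod>i\<in>{j}. \<rho> i ^ (if i = j then n else 0))"
        by (rule mr_eq) auto
      thus ?thesis using gauss_mono_eq[OF mi] by simp
    qed
    finally show ?thesis by simp
  qed
  hence H: "\<forall>n\<ge>1. y (ser_var j) ^ n \<le> C * (real n + 1) ^ 0 * \<rho> j ^ n" by blast
  have r0: "0 \<le> \<rho> j" using rpos less_imp_le by blast
  show ?thesis by (rule power_trick[OF spec_nonneg[OF y] r0 H])
qed

lemma spec_sum_le:
  assumes y: "y \<in> spec absv \<rho> V I" and p: "ispoly V p"
  shows "y p \<le> (\<Sum>\<nu>\<in>ssupp p. y (smono (p \<nu>) \<nu>))"
proof -
  have fin: "finite (ssupp p)" and sub: "ssupp p \<subseteq> multi_indices V" using p unfolding ispoly_def by auto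
  have "\<forall>F. F \<subseteq> ssupp p \<longrightarrow> y (\<lambda>\<mu>. if \<mu> \<in> F then p \<mu> else 0) \<le> (\<Sum>\<nu>\<in>F. y (smono (p \<nu>) \<nu>))"
  proof (intro allI impI)
    fix F assume F: "F \<subseteq> ssupp p"
    hence "finite F" using fin finite_subset by blast
    thus "y (\<lambda>\<mu>. if \<mu> \<in> F then p \<mu> else 0) \<le> (\<Sum>\<nu>\<in>F. y (smono (p \<nu>) \<nu>))" using F
    proof (induction F rule: finite_induct)
      case empty
      have "(\<lambda>\<mu>. if \<mu> \<in> {} then p \<mu> else 0) = ser_zero" by (simp add: ser_zero_def)
      thus ?case using spec_zero[OF y] by simp
    next
      case (insert a F)
      have eq: "(\<lambda>\<mu>. if \<mu> \<in> insert a F then p \<mu> else 0) = ser_add (smono (p a) a) (\<lambda>\<mu>. if \<mu> \<in> F then p \<mu> else 0)"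
        using insert.hyps(2) by (auto simp: ser_add_def smono_def intro!: ext)
      have t1: "smono (p a) a \<in> tate absv \<rho> V" using insert.prems sub by (intro smono_tate) auto
      have t2: "(\<lambda>\<mu>. if \<mu> \<in> F then p \<mu> else 0) \<in> tate absv \<rho> V"
      proof (rule tate_finsupp)
        show "finite (ssupp (\<lambda>\<mu>. if \<mu> \<in> F then p \<mu> else 0))"
          by (rule finite_subset[of _ F]) (auto simp: ssupp_def intro: insert.hyps)
        show "ssupp (\<lambda>\<mu>. if \<mu> \<in> F then p \<mu> else 0) \<subseteq> multi_indices V"
          using insert.prems sub by (auto simp: ssupp_def)
      qed
      have "y (\<lambda>\<mu>. if \<mu> \<in> insert a F then p \<mu> else 0) \<le> y (smono (p a) a) + y (\<lambda>\<mu>. if \<mu> \<in> F then p \<mu> else 0)"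
        unfolding eq by (rule spec_add[OF y t1 t2])
      also have "\<dots> \<le> y (smono (p a) a) + (\<Sum>\<nu>\<in>F. y (smono (p \<nu>) \<nu>))" using insert by simp
      finally show ?case using insert.hyps by simp
    qed
  qed
  moreover have "(\<lambda>\<mu>. if \<mu> \<in> ssupp p then p \<mu> else 0) = p" by (auto simp: fun_eq_iff ssupp_def)
  ultimately show ?thesis using fin by auto
qed

lemma smono_le:
  assumes y: "y \<in> spec absv \<rho> V I" and fV: "finite V" and yv: "\<forall>j\<in>V. y (ser_var j) \<le> 1"
    and nu: "\<nu> \<in> multi_indices V"
  shows "y (smono c \<nu>) \<le> y (smono c (\<lambda>_. 0))"
  using nu
proof (induction "\<Sum>j\<in>V. \<nu> j" arbitrary: \<nu> rule: less_induct)
  case less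
  show ?case
  proof (cases "\<nu> = (\<lambda>_. 0)")
    case True thus ?thesis by simp
  next
    case False
    then obtain j where j: "\<nu> j \<noteq> 0" by auto
    have jV: "j \<in> V" using less.prems j unfolding multi_indices_def by auto
    define \<nu>' where "\<nu>' = \<nu>(j := \<nu> j - 1)"
    have mi': "\<nu>' \<in> multi_indices V" unfolding \<nu>'_def by (rule mi_le[OF less.prems]) simp
    have s: "(\<Sum>i\<in>V. \<nu> i) = \<nu> j + (\<Sum>i\<in>V-{j}. \<nu> i)" using fV jV by (rule sum.remove)
    have s': "(\<Sum>i\<in>V. \<nu>' i) = \<nu>' j + (\<Sum>i\<in>V-{j}. \<nu>' i)" using fV jV by (rule sum.remove)
    have "(\<Sum>i\<in>V-{j}. \<nu>' i) = (\<Sum>i\<in>V-{j}. \<nu> i)" unfolding \<nu>'_def by (rule sum.cong) auto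
    hence lt: "(\<Sum>i\<in>V. \<nu>' i) < (\<Sum>i\<in>V. \<nu> i)" using s s' j unfolding \<nu>'_def by simp
    have ej: "(\<lambda>i. if i = j then 1 else 0) \<in> multi_indices V" by (rule ej_mi[OF jV])
    have eq: "smono c \<nu> = ser_mul (smono c \<nu>') (ser_var j)"
    proof -
      have "ser_mul (smono c \<nu>') (smono 1 (\<lambda>i. if i = j then 1 else 0)) = smono (c*1) (\<lambda>i. \<nu>' i + (if i = j then 1 else 0))"
        by (rule mul_smono[OF mi_finite[OF mi'] mi_finite[OF ej]])
      moreover have "(\<lambda>i. \<nu>' i + (if i = j then 1 else 0)) = \<nu>" using j unfolding \<nu>'_def by auto
      ultimately show ?thesis by (simp add: var_eq)
    qed
    have "y (smono c \<nu>) = y (smono c \<nu>') * y (ser_var j)"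
      unfolding eq by (rule spec_mul[OF y smono_tate[OF mi'] var_tate[OF jV]])
    also have "\<dots> \<le> y (smono c \<nu>') * 1"
      using yv jV spec_nonneg[OF y] by (intro mult_left_mono) blast+
    also have "\<dots> \<le> y (smono c (\<lambda>_. 0))" using less.hyps[OF lt mi'] by simp
    finally show ?thesis .
  qed
qed

end

lemma lim_by_bound:
  fixes X \<delta> :: "nat \<Rightarrow> real"
  assumes "\<And>n. \<bar>X n - a\<bar> \<le> \<delta> n" "\<delta> \<longlonglongrightarrow> 0"
  shows "X \<longlonglongrightarrow> a"
proof -
  have b: "a - \<delta> n \<le> X n \<and> X n \<le> a + \<delta> n" for n using assms(1)[of n] by (auto simp: abs_le_iff)
  show ?thesis
  proof (rule tendsto_sandwich[of "\<lambda>n. a - \<delta> n" _ _ "\<lambda>n. a + \<delta> n"])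
    show "\<forall>\<^sub>F n in sequentially. a - \<delta> n \<le> X n" using b by (intro always_eventually) blast
    show "\<forall>\<^sub>F n in sequentially. X n \<le> a + \<delta> n" using b by (intro always_eventually) blast
    show "(\<lambda>n. a - \<delta> n) \<longlonglongrightarrow> a" using tendsto_diff[OF tendsto_const assms(2), of a] by simp
    show "(\<lambda>n. a + \<delta> n) \<longlonglongrightarrow> a" using tendsto_add[OF tendsto_const assms(2), of a] by simp
  qed
qed

locale ext = nactx +
  fixes \<rho> \<rho>' :: "nat \<Rightarrow> real" and V :: "nat set" and I and y
  assumes rpos: "\<forall>i. 0 < \<rho> i" and r'ge: "\<forall>i. 1 \<le> \<rho>' i" and rle: "\<forall>i\<in>V. \<rho>' i \<le> \<rho> i"
    and fV: "finite V" and y: "y \<in> spec absv \<rho> V I" and yv: "\<forall>j\<in>V. y (ser_var j) \<le> 1"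
begin

lemma r'pos: "\<forall>i. 0 < \<rho>' i" using r'ge by (meson less_le_trans zero_less_one)

sublocale R: tctx absv \<rho> by unfold_locales (rule rpos)
sublocale R': tctx absv \<rho>' by unfold_locales (rule r'pos)

lemma tate_incl: "tate absv \<rho> V \<subseteq> tate absv \<rho>' V"
  by (rule tate_mono) (use r'pos rle in auto)

lemma C_ex: "\<exists>C. 0 \<le> C \<and> (\<forall>f\<in>tate absv \<rho> V. y f \<le> C * gauss absv \<rho> f)"
proof -
  obtain C where C: "\<forall>f\<in>tate absv \<rho> V. y f \<le> C * gauss absv \<rho> f" using R.spec_bdd[OF y] by blast
  have "1 \<le> C" using C[rule_format, OF R.one_tate] R.spec_one[OF y] R.gauss_one by simp
  hence "0 \<le> C" by simp
  thus ?thesis using C by blast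
qed

lemma poly_bound1:
  assumes C: "0 \<le> C" "\<forall>f\<in>tate absv \<rho> V. y f \<le> C * gauss absv \<rho> f" and p: "ispoly V p"
  shows "y p \<le> C * real (card (ssupp p)) * gauss absv \<rho>' p"
proof -
  have sub: "ssupp p \<subseteq> multi_indices V" using p unfolding ispoly_def by auto
  have pt': "p \<in> tate absv \<rho>' V" by (rule R'.poly_tate[OF p])
  have "y p \<le> (\<Sum>\<nu>\<in>ssupp p. y (smono (p \<nu>) \<nu>))" by (rule R.spec_sum_le[OF y p])
  also have "\<dots> \<le> (\<Sum>\<nu>\<in>ssupp p. C * gauss absv \<rho>' p)"
  proof (rule sum_mono)
    fix \<nu> assume nu: "\<nu> \<in> ssupp p"
    have "y (smono (p \<nu>) \<nu>) \<le> y (smono (p \<nu>) (\<lambda>_. 0))"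
      by (rule R.smono_le[OF y fV yv]) (use nu sub in auto)
    also have "\<dots> \<le> C * gauss absv \<rho> (smono (p \<nu>) (\<lambda>_. 0))"
      using C(2) R.smono_tate[OF R.zero_mi] by blast
    also have "gauss absv \<rho> (smono (p \<nu>) (\<lambda>_. 0)) = absv (p \<nu>)"
      using R.gauss_mono_eq[OF R.zero_mi] by simp
    also have "absv (p \<nu>) \<le> absv (p \<nu>) * mono_rad \<rho>' \<nu>"
      using mr_ge1[OF r'ge, of \<nu>] av_nonneg[of "p \<nu>"] by (simp add: mult_le_cancel_left1)
    also have "\<dots> \<le> gauss absv \<rho>' p" by (rule R'.gauss_ge[OF pt'])
    finally show "y (smono (p \<nu>) \<nu>) \<le> C * gauss absv \<rho>' p" using C(1) by (simp add: mult_left_mono)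
  qed
  also have "\<dots> = C * real (card (ssupp p)) * gauss absv \<rho>' p" by simp
  finally show ?thesis .
qed

lemma spow_box:
  assumes p: "ssupp p \<subseteq> box V D" and ptt: "p \<in> tate absv \<rho> V"
  shows "ssupp (spow p n) \<subseteq> box V (n * D)"
proof (induction n)
  case 0
  have "ssupp (spow p 0) \<subseteq> {\<lambda>_. 0}" by (auto simp: spow_def ser_one_def ssupp_def)
  thus ?case using R.zero_mi[of V] by (auto simp: box_def)
next
  case (Suc n)
  have pt: "p \<in> tate absv \<rho> V" by (rule R.poly_tate[OF box_poly[OF fV p]])
  have st: "spow p n \<in> tate absv \<rho> V" by (rule R.poly_tate[OF box_poly[OF fV Suc.IH]])
  have "ssupp (ser_mul p (spow p n)) \<subseteq> box V (D + n * D)" by (rule R.mul_box[OF pt st p Suc.IH])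
  thus ?case by (simp add: spow_def)
qed

lemma spow_y:
  assumes p: "ssupp p \<subseteq> box V D" and ptt: "p \<in> tate absv \<rho> V"
  shows "y (spow p n) = y p ^ n"
proof (induction n)
  case 0 thus ?case using R.spec_one[OF y] by (simp add: spow_def)
next
  case (Suc n)
  have pt: "p \<in> tate absv \<rho> V" by (rule R.poly_tate[OF box_poly[OF fV p]])
  have st: "spow p n \<in> tate absv \<rho> V" by (rule R.poly_tate[OF box_poly[OF fV spow_box[OF p ptt]]])
  have "y (spow p (Suc n)) = y (ser_mul p (spow p n))" by (simp add: spow_def)
  also have "\<dots> = y p * y (spow p n)" by (rule R.spec_mul[OF y pt st])
  finally show ?case using Suc by simp
qed

lemma spow_gauss:
  assumes p: "ssupp p \<subseteq> box V D" and ptt: "p \<in> tate absv \<rho> V"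
  shows "gauss absv \<rho>' (spow p n) \<le> gauss absv \<rho>' p ^ n"
proof (induction n)
  case 0 thus ?case using R'.gauss_one by (simp add: spow_def)
next
  case (Suc n)
  have pt: "p \<in> tate absv \<rho>' V" by (rule R'.poly_tate[OF box_poly[OF fV p]])
  have st: "spow p n \<in> tate absv \<rho>' V" by (rule R'.poly_tate[OF box_poly[OF fV spow_box[OF p ptt]]])
  have "gauss absv \<rho>' (spow p (Suc n)) = gauss absv \<rho>' (ser_mul p (spow p n))" by (simp add: spow_def)
  also have "\<dots> \<le> gauss absv \<rho>' p * gauss absv \<rho>' (spow p n)" by (rule R'.gauss_mul[OF pt st])
  also have "\<dots> \<le> gauss absv \<rho>' p * gauss absv \<rho>' p ^ n"
    using Suc R'.gauss_nonneg[OF pt] by (intro mult_left_mono)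
  finally show ?case by simp
qed

lemma poly_bound:
  assumes p: "ispoly V p"
  shows "y p \<le> gauss absv \<rho>' p"
proof -
  obtain C where C: "0 \<le> C" "\<forall>f\<in>tate absv \<rho> V. y f \<le> C * gauss absv \<rho> f" using C_ex by blast
  obtain D where D: "ssupp p \<subseteq> box V D" using poly_box[OF p] by blast
  have pt': "p \<in> tate absv \<rho>' V" by (rule R'.poly_tate[OF p])
  have ptd: "p \<in> tate absv \<rho> V" by (rule R.poly_tate[OF p])
  let ?G = "gauss absv \<rho>' p" and ?c = "card V"
  have G0: "0 \<le> ?G" by (rule R'.gauss_nonneg[OF pt'])
  have "y p ^ n \<le> (C * (real D + 1) ^ ?c) * (real n + 1) ^ ?c * ?G ^ n" if "n \<ge> 1" for n
  proof -
    have bx: "ssupp (spow p n) \<subseteq> box V (n * D)" by (rule spow_box[OF D ptd])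
    have sp: "ispoly V (spow p n)" by (rule box_poly[OF fV bx])
    have "card (ssupp (spow p n)) \<le> card (box V (n*D))" by (rule card_mono[OF box_finite[OF fV] bx])
    also have "\<dots> \<le> (n*D + 1) ^ ?c" by (rule box_card[OF fV])
    finally have cd: "real (card (ssupp (spow p n))) \<le> (real n * real D + 1) ^ ?c"
      by (metis of_nat_1 of_nat_add of_nat_le_iff of_nat_mult of_nat_power)
    have "real n * real D + 1 \<le> (real D + 1) * (real n + 1)" by (simp add: algebra_simps)
    hence cd2: "(real n * real D + 1) ^ ?c \<le> (real D + 1) ^ ?c * (real n + 1) ^ ?c"
      by (metis power_mono power_mult_distrib add_nonneg_nonneg of_nat_0_le_iff mult_nonneg_nonneg zero_le_one)
    have "y p ^ n = y (spow p n)" using spow_y[OF D ptd] by simp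
    also have "\<dots> \<le> C * real (card (ssupp (spow p n))) * gauss absv \<rho>' (spow p n)"
      by (rule poly_bound1[OF C sp])
    also have "\<dots> \<le> C * ((real D + 1) ^ ?c * (real n + 1) ^ ?c) * ?G ^ n"
    proof (rule mult_mono)
      show "C * real (card (ssupp (spow p n))) \<le> C * ((real D + 1) ^ ?c * (real n + 1) ^ ?c)"
        using cd cd2 C(1) by (intro mult_left_mono) auto
      show "gauss absv \<rho>' (spow p n) \<le> ?G ^ n" by (rule spow_gauss[OF D ptd])
      show "0 \<le> C * ((real D + 1) ^ ?c * (real n + 1) ^ ?c)" using C(1) by simp
      show "0 \<le> gauss absv \<rho>' (spow p n)" by (rule R'.gauss_nonneg[OF R'.poly_tate[OF sp]])
    qed
    finally show ?thesis by (simp add: mult_ac)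
  qed
  thus ?thesis by (intro power_trick[OF R.spec_nonneg[OF y] G0]) blast
qed

lemma sub_poly: "ispoly V p \<Longrightarrow> ispoly V q \<Longrightarrow> ispoly V (ser_sub p q)"
proof -
  assume "ispoly V p" "ispoly V q"
  moreover have "ssupp (ser_sub p q) \<subseteq> ssupp p \<union> ssupp q" unfolding ssupp_def ser_sub_def by auto
  ultimately show ?thesis unfolding ispoly_def by (meson finite_Un finite_subset le_sup_iff order_trans)
qed

lemma y_lip:
  assumes p: "ispoly V p" and q: "ispoly V q"
  shows "\<bar>y p - y q\<bar> \<le> gauss absv \<rho>' (ser_sub p q)"
proof -
  have pq: "ispoly V (ser_sub p q)" and qp: "ispoly V (ser_sub q p)" using sub_poly p q by auto
  have "y p = y (ser_add q (ser_sub p q))" by (simp add: ser_add_def ser_sub_def)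
  also have "\<dots> \<le> y q + y (ser_sub p q)" by (rule R.spec_add[OF y R.poly_tate[OF q] R.poly_tate[OF pq]])
  finally have 1: "y p - y q \<le> gauss absv \<rho>' (ser_sub p q)" using poly_bound[OF pq] by simp
  have "y q = y (ser_add p (ser_sub q p))" by (simp add: ser_add_def ser_sub_def)
  also have "\<dots> \<le> y p + y (ser_sub q p)" by (rule R.spec_add[OF y R.poly_tate[OF p] R.poly_tate[OF qp]])
  finally have 2: "y q - y p \<le> gauss absv \<rho>' (ser_sub p q)"
    using poly_bound[OF qp] R'.gauss_sub_sym[of q p] by simp
  show ?thesis using 1 2 by (simp add: abs_le_iff)
qed

end

context ext begin

definition xe :: "'a series \<Rightarrow> real" where
  "xe f = (if f \<in> tate absv \<rho>' V then lim (\<lambda>M. y (trunc M f)) else 0)"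

lemma trunc_poly: "f \<in> tate absv \<rho>' V \<Longrightarrow> ispoly V (trunc M f)"
  using R'.trunc_tate[OF _ fV] unfolding ispoly_def box_def by blast

lemma trunc_diff: "ser_sub (trunc N f) (trunc M f) = ser_sub (ser_sub f (trunc M f)) (ser_sub f (trunc N f))"
  by (simp add: ser_sub_def fun_eq_iff)

lemma st_tate: "f \<in> tate absv \<rho>' V \<Longrightarrow> ser_sub f (trunc M f) \<in> tate absv \<rho>' V"
proof -
  assume f: "f \<in> tate absv \<rho>' V"
  have t: "trunc M f \<in> tate absv \<rho>' V" by (rule R'.trunc_tate(1)[OF f fV])
  show ?thesis by (rule R'.sub_tate(1)[OF f t])
qed

lemma eps_nonneg: "f \<in> tate absv \<rho>' V \<Longrightarrow> 0 \<le> gauss absv \<rho>' (ser_sub f (trunc M f))"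
  by (rule R'.gauss_nonneg[OF st_tate])

lemma trunc_lip:
  assumes f: "f \<in> tate absv \<rho>' V"
  shows "\<bar>y (trunc N f) - y (trunc M f)\<bar> \<le> max (gauss absv \<rho>' (ser_sub f (trunc M f))) (gauss absv \<rho>' (ser_sub f (trunc N f)))"
proof -
  have "\<bar>y (trunc N f) - y (trunc M f)\<bar> \<le> gauss absv \<rho>' (ser_sub (trunc N f) (trunc M f))"
    by (rule y_lip[OF trunc_poly[OF f] trunc_poly[OF f]])
  also have "\<dots> \<le> max (gauss absv \<rho>' (ser_sub f (trunc M f))) (gauss absv \<rho>' (ser_sub f (trunc N f)))"
    unfolding trunc_diff by (rule R'.sub_tate(2)[OF st_tate[OF f] st_tate[OF f]])
  finally show ?thesis .
qed

lemma xe_conv: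
  assumes f: "f \<in> tate absv \<rho>' V"
  shows "(\<lambda>M. y (trunc M f)) \<longlonglongrightarrow> xe f"
proof -
  have "Cauchy (\<lambda>M. y (trunc M f))"
  proof (rule CauchyI)
    fix e :: real assume e: "0 < e"
    obtain M0 where M0: "\<forall>M\<ge>M0. gauss absv \<rho>' (ser_sub f (trunc M f)) \<le> e/2"
      using R'.trunc_conv[OF f, of "e/2"] e by auto
    have "norm (y (trunc m f) - y (trunc n f)) < e" if "m \<ge> M0" "n \<ge> M0" for m n
    proof -
      have "gauss absv \<rho>' (ser_sub f (trunc m f)) \<le> e/2" "gauss absv \<rho>' (ser_sub f (trunc n f)) \<le> e/2"
        using M0 that by auto
      thus ?thesis using trunc_lip[OF f, of m n] e by simp
    qed
    thus "\<exists>M. \<forall>m\<ge>M. \<forall>n\<ge>M. norm (y (trunc m f) - y (trunc n f)) < e" by blast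
  qed
  hence "(\<lambda>M. y (trunc M f)) \<longlonglongrightarrow> lim (\<lambda>M. y (trunc M f))"
    by (simp add: Cauchy_convergent_iff convergent_LIMSEQ_iff)
  thus ?thesis using f by (simp add: xe_def)
qed

lemma xe_bound:
  assumes f: "f \<in> tate absv \<rho>' V"
  shows "\<bar>xe f - y (trunc M f)\<bar> \<le> gauss absv \<rho>' (ser_sub f (trunc M f))"
proof -
  let ?e = "\<lambda>N. gauss absv \<rho>' (ser_sub f (trunc N f))"
  have l1: "(\<lambda>N. \<bar>y (trunc N f) - y (trunc M f)\<bar>) \<longlonglongrightarrow> \<bar>xe f - y (trunc M f)\<bar>"
    by (intro tendsto_rabs tendsto_diff xe_conv[OF f] tendsto_const)
  have l2: "(\<lambda>N. max (?e M) (?e N)) \<longlonglongrightarrow> max (?e M) 0"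
    by (intro tendsto_max tendsto_const R'.trunc_conv_lim[OF f fV])
  have "\<bar>xe f - y (trunc M f)\<bar> \<le> max (?e M) 0"
    by (rule LIMSEQ_le[OF l1 l2]) (use trunc_lip[OF f] in blast)
  thus ?thesis using eps_nonneg[OF f, of M] by simp
qed

lemma xe_approx:
  assumes f: "f \<in> tate absv \<rho>' V" and p: "ispoly V p"
  shows "\<bar>xe f - y p\<bar> \<le> gauss absv \<rho>' (ser_sub f p)"
proof -
  let ?e = "\<lambda>N. gauss absv \<rho>' (ser_sub f (trunc N f))"
  let ?g = "gauss absv \<rho>' (ser_sub f p)"
  have pt: "p \<in> tate absv \<rho>' V" by (rule R'.poly_tate[OF p])
  have g0: "0 \<le> ?g" by (rule R'.gauss_nonneg[OF R'.sub_tate(1)[OF f pt]])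
  have b: "\<bar>xe f - y p\<bar> \<le> 2 * ?e M + ?g" for M
  proof -
    have "\<bar>y (trunc M f) - y p\<bar> \<le> gauss absv \<rho>' (ser_sub (trunc M f) p)"
      by (rule y_lip[OF trunc_poly[OF f] p])
    also have "ser_sub (trunc M f) p = ser_sub (ser_sub f p) (ser_sub f (trunc M f))"
      by (simp add: ser_sub_def fun_eq_iff)
    also have "gauss absv \<rho>' \<dots> \<le> max ?g (?e M)"
      by (rule R'.sub_tate(2)[OF R'.sub_tate(1)[OF f pt] st_tate[OF f]])
    also have "\<dots> \<le> ?g + ?e M" using g0 eps_nonneg[OF f, of M] by simp
    finally have 1: "\<bar>y (trunc M f) - y p\<bar> \<le> ?g + ?e M" .
    have 2: "\<bar>xe f - y (trunc M f)\<bar> \<le> ?e M" by (rule xe_bound[OF f])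
    show ?thesis using 1 2 eps_nonneg[OF f, of M] by linarith
  qed
  have l: "(\<lambda>M. 2 * ?e M + ?g) \<longlonglongrightarrow> 2 * 0 + ?g"
    by (intro tendsto_add tendsto_mult tendsto_const R'.trunc_conv_lim[OF f fV])
  have "\<bar>xe f - y p\<bar> \<le> 2 * 0 + ?g" by (rule LIMSEQ_le_const[OF l]) (use b in blast)
  thus ?thesis by simp
qed

end

context ext begin

lemma trunc_tate_rho: "f \<in> tate absv \<rho>' V \<Longrightarrow> trunc M f \<in> tate absv \<rho> V"
  by (rule R.poly_tate[OF trunc_poly])

lemma xe_agree:
  assumes f: "f \<in> tate absv \<rho> V"
  shows "xe f = y f"
proof -
  have f': "f \<in> tate absv \<rho>' V" using f tate_incl by blast
  obtain C where C: "0 \<le> C" "\<forall>f\<in>tate absv \<rho> V. y f \<le> C * gauss absv \<rho> f" using C_ex by blast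
  have b: "\<bar>y (trunc M f) - y f\<bar> \<le> C * gauss absv \<rho> (ser_sub f (trunc M f))" for M
  proof -
    have t: "trunc M f \<in> tate absv \<rho> V" by (rule R.trunc_tate(1)[OF f fV])
    have s1: "ser_sub f (trunc M f) \<in> tate absv \<rho> V" by (rule R.sub_tate(1)[OF f t])
    have s2: "ser_sub (trunc M f) f \<in> tate absv \<rho> V" by (rule R.sub_tate(1)[OF t f])
    have e1: "ser_add (trunc M f) (ser_sub f (trunc M f)) = f" by (simp add: ser_add_def ser_sub_def)
    have e2: "ser_add f (ser_sub (trunc M f) f) = trunc M f" by (simp add: ser_add_def ser_sub_def)
    have a1: "y f \<le> y (trunc M f) + y (ser_sub f (trunc M f))"
      using R.spec_add[OF y t s1] unfolding e1 .
    have a2: "y (ser_sub f (trunc M f)) \<le> C * gauss absv \<rho> (ser_sub f (trunc M f))" using C(2) s1 by blast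
    have a3: "y (trunc M f) \<le> y f + y (ser_sub (trunc M f) f)"
      using R.spec_add[OF y f s2] unfolding e2 .
    have a4: "y (ser_sub (trunc M f) f) \<le> C * gauss absv \<rho> (ser_sub (trunc M f) f)" using C(2) s2 by blast
    have a5: "gauss absv \<rho> (ser_sub (trunc M f) f) = gauss absv \<rho> (ser_sub f (trunc M f))"
      by (rule R.gauss_sub_sym)
    have 1: "y f - y (trunc M f) \<le> C * gauss absv \<rho> (ser_sub f (trunc M f))" using a1 a2 by linarith
    have 2: "y (trunc M f) - y f \<le> C * gauss absv \<rho> (ser_sub f (trunc M f))" using a3 a4 unfolding a5 by linarith
    show ?thesis using 1 2 by (simp add: abs_le_iff)
  qed
  have "(\<lambda>M. C * gauss absv \<rho> (ser_sub f (trunc M f))) \<longlonglongrightarrow> C * 0"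
    by (intro tendsto_mult tendsto_const R.trunc_conv_lim[OF f fV])
  hence "(\<lambda>M. y (trunc M f)) \<longlonglongrightarrow> y f" by (intro lim_by_bound[OF b]) simp
  from LIMSEQ_unique[OF xe_conv[OF f'] this] show ?thesis .
qed

lemma xe_spec:
  assumes IV: "I \<subseteq> tate absv \<rho> V"
  shows "xe \<in> spec absv \<rho>' V I"
  unfolding spec_def
proof (intro CollectI conjI allI impI ballI)
  fix f assume "f \<notin> tate absv \<rho>' V" thus "xe f = 0" by (simp add: xe_def)
next
  show "xe ser_zero = 0" using xe_agree[OF R.zero_tate] R.spec_zero[OF y] by simp
next
  show "xe ser_one = 1" using xe_agree[OF R.one_tate] R.spec_one[OF y] by simp
next
  fix f assume f: "f \<in> tate absv \<rho>' V"
  show "0 \<le> xe f" by (rule LIMSEQ_le_const[OF xe_conv[OF f]]) (use R.spec_nonneg[OF y] in blast)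
next
  fix f g assume f: "f \<in> tate absv \<rho>' V" and g: "g \<in> tate absv \<rho>' V"
  have fg: "ser_add f g \<in> tate absv \<rho>' V" by (rule R'.add_tate(1)[OF f g])
  have ad: "y (trunc M (ser_add f g)) \<le> y (trunc M f) + y (trunc M g)" for M
  proof -
    have "trunc M (ser_add f g) = ser_add (trunc M f) (trunc M g)"
      by (simp add: trunc_def ser_add_def fun_eq_iff)
    thus ?thesis using R.spec_add[OF y trunc_tate_rho[OF f] trunc_tate_rho[OF g]] by simp
  qed
  show "xe (ser_add f g) \<le> xe f + xe g"
    by (rule LIMSEQ_le[OF xe_conv[OF fg] tendsto_add[OF xe_conv[OF f] xe_conv[OF g]]]) (use ad in blast)
next
  fix f g assume f: "f \<in> tate absv \<rho>' V" and g: "g \<in> tate absv \<rho>' V"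
  have fg: "ser_mul f g \<in> tate absv \<rho>' V" by (rule R'.mul_tate[OF f g])
  let ?p = "\<lambda>M. ser_mul (trunc M f) (trunc M g)"
  let ?ef = "\<lambda>M. gauss absv \<rho>' (ser_sub f (trunc M f))" and ?eg = "\<lambda>M. gauss absv \<rho>' (ser_sub g (trunc M g))"
  let ?F = "gauss absv \<rho>' f" and ?G = "gauss absv \<rho>' g"
  have tf: "trunc M f \<in> tate absv \<rho>' V" for M by (rule R'.trunc_tate(1)[OF f fV])
  have tg: "trunc M g \<in> tate absv \<rho>' V" for M by (rule R'.trunc_tate(1)[OF g fV])
  have pp: "ispoly V (?p M)" for M
  proof -
    have "ssupp (?p M) \<subseteq> box V (M + M)"
      by (rule R'.mul_box[OF tf tg R'.trunc_tate(2)[OF f fV] R'.trunc_tate(2)[OF g fV]])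
    thus ?thesis by (rule box_poly[OF fV])
  qed
  have yp: "y (?p M) = y (trunc M f) * y (trunc M g)" for M
    by (rule R.spec_mul[OF y trunc_tate_rho[OF f] trunc_tate_rho[OF g]])
  have l1: "(\<lambda>M. y (?p M)) \<longlonglongrightarrow> xe f * xe g"
    unfolding yp by (intro tendsto_mult xe_conv f g)
  let ?d = "\<lambda>M. gauss absv \<rho>' (ser_sub (ser_mul f g) (?p M))"
  have dle: "\<bar>?d M - 0\<bar> \<le> ?ef M * ?G + ?F * ?eg M" for M
  proof -
    have sf: "ser_sub f (trunc M f) \<in> tate absv \<rho>' V" by (rule st_tate[OF f])
    have sg: "ser_sub g (trunc M g) \<in> tate absv \<rho>' V" by (rule st_tate[OF g])
    have a: "ser_mul (ser_sub f (trunc M f)) g \<in> tate absv \<rho>' V" by (rule R'.mul_tate[OF sf g])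
    have b: "ser_mul (trunc M f) (ser_sub g (trunc M g)) \<in> tate absv \<rho>' V" by (rule R'.mul_tate[OF tf sg])
    have d0: "0 \<le> ?d M" by (rule R'.gauss_nonneg[OF R'.sub_tate(1)[OF fg R'.mul_tate[OF tf tg]]])
    have "?d M = gauss absv \<rho>' (ser_add (ser_mul (ser_sub f (trunc M f)) g) (ser_mul (trunc M f) (ser_sub g (trunc M g))))"
      by (simp add: bilin)
    also have "\<dots> \<le> max (gauss absv \<rho>' (ser_mul (ser_sub f (trunc M f)) g)) (gauss absv \<rho>' (ser_mul (trunc M f) (ser_sub g (trunc M g))))"
      by (rule R'.add_tate(2)[OF a b])
    also have "\<dots> \<le> gauss absv \<rho>' (ser_mul (ser_sub f (trunc M f)) g) + gauss absv \<rho>' (ser_mul (trunc M f) (ser_sub g (trunc M g)))"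
      using R'.gauss_nonneg[OF a] R'.gauss_nonneg[OF b] by simp
    also have "\<dots> \<le> ?ef M * ?G + ?F * ?eg M"
    proof (rule add_mono)
      show "gauss absv \<rho>' (ser_mul (ser_sub f (trunc M f)) g) \<le> ?ef M * ?G" by (rule R'.gauss_mul[OF sf g])
      have "gauss absv \<rho>' (ser_mul (trunc M f) (ser_sub g (trunc M g))) \<le> gauss absv \<rho>' (trunc M f) * ?eg M"
        by (rule R'.gauss_mul[OF tf sg])
      also have "\<dots> \<le> ?F * ?eg M"
      proof (rule mult_right_mono)
        show "gauss absv \<rho>' (trunc M f) \<le> ?F" by (rule R'.gauss_mono_pt[OF f]) (simp add: trunc_def av_nonneg)
        show "0 \<le> ?eg M" by (rule eps_nonneg[OF g])
      qed
      finally show "gauss absv \<rho>' (ser_mul (trunc M f) (ser_sub g (trunc M g))) \<le> ?F * ?eg M" .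
    qed
    finally show ?thesis using d0 by simp
  qed
  have "(\<lambda>M. ?ef M * ?G + ?F * ?eg M) \<longlonglongrightarrow> 0 * ?G + ?F * 0"
    by (intro tendsto_add tendsto_mult tendsto_const R'.trunc_conv_lim[OF f fV] R'.trunc_conv_lim[OF g fV])
  hence l0: "(\<lambda>M. ?ef M * ?G + ?F * ?eg M) \<longlonglongrightarrow> 0" by simp
  have d: "?d \<longlonglongrightarrow> 0" by (rule lim_by_bound[OF dle l0])
  have bnd: "\<bar>y (?p M) - xe (ser_mul f g)\<bar> \<le> ?d M" for M
    using xe_approx[OF fg pp[of M]] by (simp add: abs_minus_commute)
  have l2: "(\<lambda>M. y (?p M)) \<longlonglongrightarrow> xe (ser_mul f g)" by (rule lim_by_bound[OF bnd d])
  show "xe (ser_mul f g) = xe f * xe g" using LIMSEQ_unique[OF l2 l1] .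
next
  show "\<exists>C. \<forall>f\<in>tate absv \<rho>' V. xe f \<le> C * gauss absv \<rho>' f"
  proof (intro exI[of _ 1] ballI)
    fix f assume f: "f \<in> tate absv \<rho>' V"
    have "y (trunc M f) \<le> gauss absv \<rho>' f" for M
    proof -
      have "y (trunc M f) \<le> gauss absv \<rho>' (trunc M f)" by (rule poly_bound[OF trunc_poly[OF f]])
      also have "\<dots> \<le> gauss absv \<rho>' f" by (rule R'.gauss_mono_pt[OF f]) (simp add: trunc_def av_nonneg)
      finally show ?thesis .
    qed
    hence "xe f \<le> gauss absv \<rho>' f"
      by (intro LIMSEQ_le[OF xe_conv[OF f] tendsto_const]) (intro exI[of _ 0] allI impI)
    thus "xe f \<le> 1 * gauss absv \<rho>' f" by simp
  qed
next
  fix f assume fI: "f \<in> I"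
  hence "f \<in> tate absv \<rho> V" using IV by blast
  hence "xe f = y f" by (rule xe_agree)
  thus "xe f = 0" using R.spec_I[OF y fI] by simp
qed

end

lemma sa_sub: "A \<in> semianalytic_sets P F \<Longrightarrow> A \<subseteq> P"
  by (induction rule: semianalytic_sets.induct) auto

lemma sa_pull:
  assumes "A \<in> semianalytic_sets P F" and "\<forall>x\<in>Q. \<phi> x \<in> P" and "F \<subseteq> G"
    and "\<forall>x\<in>Q. \<forall>f\<in>F. \<phi> x f = x f"
  shows "{x\<in>Q. \<phi> x \<in> A} \<in> semianalytic_sets Q G"
  using assms(1)
proof (induction rule: semianalytic_sets.induct)
  case (basic f g)
  have "{x\<in>Q. \<phi> x \<in> {z\<in>P. z f \<le> z g}} = {x\<in>Q. x f \<le> x g}"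
  proof (intro Collect_cong conj_cong refl)
    fix x assume "x \<in> Q"
    thus "(\<phi> x \<in> {z\<in>P. z f \<le> z g}) = (x f \<le> x g)" using assms(2,4) basic by simp
  qed
  moreover have "{x\<in>Q. x f \<le> x g} \<in> semianalytic_sets Q G"
    using basic assms(3) by (intro semianalytic_sets.basic) auto
  ultimately show ?case by simp
next
  case (compl A)
  have "{x\<in>Q. \<phi> x \<in> P - A} = Q - {x\<in>Q. \<phi> x \<in> A}" using assms(2) by auto
  thus ?case using semianalytic_sets.compl[OF compl.IH] by simp
next
  case (union A B)
  have "{x\<in>Q. \<phi> x \<in> A \<union> B} = {x\<in>Q. \<phi> x \<in> A} \<union> {x\<in>Q. \<phi> x \<in> B}" by auto
  thus ?case using semianalytic_sets.union[OF union.IH] by simp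
qed

context nactx begin

lemma res_spec:
  assumes p1: "\<forall>i. 0 < \<rho>1 i" and p2: "\<forall>i. 0 < \<rho>2 i" and le: "\<forall>i\<in>V. \<rho>2 i \<le> \<rho>1 i"
    and x: "x \<in> spec absv \<rho>2 V I"
  shows "(\<lambda>f. if f \<in> tate absv \<rho>1 V then x f else 0) \<in> spec absv \<rho>1 V I"
proof -
  interpret R1: tctx absv \<rho>1 by unfold_locales (rule p1)
  interpret R2: tctx absv \<rho>2 by unfold_locales (rule p2)
  have inc: "tate absv \<rho>1 V \<subseteq> tate absv \<rho>2 V" by (rule tate_mono) (use p2 le in auto)
  obtain C where C: "\<forall>f\<in>tate absv \<rho>2 V. x f \<le> C * gauss absv \<rho>2 f" using R2.spec_bdd[OF x] by blast
  have "1 \<le> C" using C[rule_format, OF R2.one_tate] R2.spec_one[OF x] R2.gauss_one by simp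
  show ?thesis unfolding spec_def
  proof (intro CollectI conjI allI impI ballI)
    show "(if ser_zero \<in> tate absv \<rho>1 V then x ser_zero else 0) = 0"
      using R2.spec_zero[OF x] by simp
    show "(if ser_one \<in> tate absv \<rho>1 V then x ser_one else 0) = 1"
      using R2.spec_one[OF x] R1.one_tate by simp
  next
    fix f assume "f \<in> tate absv \<rho>1 V"
    thus "0 \<le> (if f \<in> tate absv \<rho>1 V then x f else 0)" using R2.spec_nonneg[OF x] by simp
  next
    fix f g assume f: "f \<in> tate absv \<rho>1 V" and g: "g \<in> tate absv \<rho>1 V"
    have f2: "f \<in> tate absv \<rho>2 V" and g2: "g \<in> tate absv \<rho>2 V" using f g inc by auto
    show "(if ser_add f g \<in> tate absv \<rho>1 V then x (ser_add f g) else 0)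
        \<le> (if f \<in> tate absv \<rho>1 V then x f else 0) + (if g \<in> tate absv \<rho>1 V then x g else 0)"
      using R2.spec_add[OF x f2 g2] R1.add_tate(1)[OF f g] f g by simp
    show "(if ser_mul f g \<in> tate absv \<rho>1 V then x (ser_mul f g) else 0)
        = (if f \<in> tate absv \<rho>1 V then x f else 0) * (if g \<in> tate absv \<rho>1 V then x g else 0)"
      using R2.spec_mul[OF x f2 g2] R1.mul_tate[OF f g] f g by simp
  next
    show "\<exists>C. \<forall>f\<in>tate absv \<rho>1 V. (if f \<in> tate absv \<rho>1 V then x f else 0) \<le> C * gauss absv \<rho>1 f"
    proof (intro exI[of _ C] ballI)
      fix f assume f: "f \<in> tate absv \<rho>1 V"
      have f2: "f \<in> tate absv \<rho>2 V" using f inc by auto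
      have "x f \<le> C * gauss absv \<rho>2 f" using C f2 by blast
      also have "\<dots> \<le> C * gauss absv \<rho>1 f"
        using gauss_radius_mono[OF p1 p2 f le] \<open>1 \<le> C\<close> by (intro mult_left_mono) auto
      finally show "(if f \<in> tate absv \<rho>1 V then x f else 0) \<le> C * gauss absv \<rho>1 f" using f by simp
    qed
  next
    fix f assume "f \<notin> tate absv \<rho>1 V" thus "(if f \<in> tate absv \<rho>1 V then x f else 0) = 0" by simp
  next
    fix f assume "f \<in> I" thus "(if f \<in> tate absv \<rho>1 V then x f else 0) = 0" using R2.spec_I[OF x] by simp
  qed
qed

end

theorem corollary1p38:
  fixes absv :: "'k::field \<Rightarrow> real"
    and d n :: nat
    and I :: "'k series set"
    and r :: "nat \<Rightarrow> real"
    and S :: "('k series \<Rightarrow> real) set"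
  assumes "valued_field absv"
    and "is_ideal (tate absv (\<lambda>_. 1) {..<d}) I"
    and "\<forall>i<n. r i > 1 \<and> in_sqrt_value_group absv (r i)"
    and "oc_subanalytic absv (\<lambda>i. if i < d then 1 else r (i - d)) (d + n) I S"
  shows "oc_subanalytic absv (\<lambda>_. 1) d I
           (restr absv (\<lambda>_. 1) d ` (S \<inter> {x. \<forall>j\<in>{d..<d+n}. x (ser_var j) \<le> 1}))"
proof -
  have na: "nonarch_abs absv" using assms(1) unfolding valued_field_def by blast
  interpret nactx absv by unfold_locales (rule na)
  have rgt: "\<And>i. i < n \<Longrightarrow> r i > 1" using assms(3) by blast
  define \<rho>0 where "\<rho>0 = (\<lambda>i. if i < d then (1::real) else r (i - d))"
  have H4: "oc_subanalytic absv \<rho>0 (d + n) I S" using assms(4) unfolding \<rho>0_def .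
  obtain m s T where s1: "s > 1"
    and Tsa: "semianalytic absv (\<lambda>i. if i < d + n then \<rho>0 i else s) (d + n + m) I T"
    and Sdef: "S = restr absv \<rho>0 (d + n) ` (T \<inter> {x. \<forall>j\<in>{d + n..<d + n + m}. x (ser_var j) \<le> 1})"
    using H4 unfolding oc_subanalytic_def by blast
  define \<rho>1 where "\<rho>1 = (\<lambda>i. if i < d + n then \<rho>0 i else s)"
  define s' where "s' = Min (insert s (r ` {..<n}))"
  define \<rho>2 where "\<rho>2 = (\<lambda>i::nat. if i < d then (1::real) else s')"
  define V where "V = {..<d + n + m}"
  have fin: "finite (insert s (r ` {..<n}))" by simp
  have s'gt: "s' > 1" unfolding s'_def using fin s1 rgt by (subst Min_gr_iff) auto
  have s'les: "s' \<le> s" unfolding s'_def using fin by (intro Min_le) auto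
  have s'ler: "s' \<le> r i" if "i < n" for i unfolding s'_def using fin that by (intro Min_le) auto
  have p0: "0 < \<rho>0 i" if "i < d + n" for i
  proof (cases "i < d")
    case False
    hence "i - d < n" using that by simp
    hence "1 < r (i - d)" by (rule rgt)
    thus ?thesis using False unfolding \<rho>0_def by simp
  qed (simp add: \<rho>0_def)
  have p1: "\<forall>i. 0 < \<rho>1 i" unfolding \<rho>1_def using p0 s1 by auto
  have r2ge: "\<forall>i. 1 \<le> \<rho>2 i" unfolding \<rho>2_def using s'gt by auto
  have p2: "\<forall>i. 0 < \<rho>2 i" using r2ge by (meson less_le_trans zero_less_one)
  have le: "\<forall>i\<in>V. \<rho>2 i \<le> \<rho>1 i"
  proof
    fix i assume "i \<in> V"
    show "\<rho>2 i \<le> \<rho>1 i"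
    proof (cases "i < d")
      case True thus ?thesis by (simp add: \<rho>1_def \<rho>2_def \<rho>0_def)
    next
      case False
      show ?thesis
      proof (cases "i < d + n")
        case True
        hence "i - d < n" using False by simp
        thus ?thesis using False True s'ler by (simp add: \<rho>1_def \<rho>2_def \<rho>0_def)
      next
        case False2: False
        thus ?thesis using False s'les by (simp add: \<rho>1_def \<rho>2_def)
      qed
    qed
  qed
  have fV: "finite V" unfolding V_def by simp
  interpret R1: tctx absv \<rho>1 by unfold_locales (rule p1)
  interpret R2: tctx absv \<rho>2 by unfold_locales (rule p2)
  have inc01: "tate absv (\<lambda>_. 1) {..<d} \<subseteq> tate absv \<rho>0 {..<d + n}"
    by (rule tate_mono) (auto simp: \<rho>0_def)
  have inc0_1: "tate absv \<rho>0 {..<d + n} \<subseteq> tate absv \<rho>1 V"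
    by (rule tate_mono) (auto intro: p0 simp: \<rho>1_def V_def)
  have inc1_0: "tate absv \<rho>1 {..<d + n} \<subseteq> tate absv \<rho>0 {..<d + n}"
    by (rule tate_mono) (auto intro: p0 simp: \<rho>1_def)
  have inc12: "tate absv \<rho>1 V \<subseteq> tate absv \<rho>2 V"
    by (rule tate_mono) (use p2 le in auto)
  have inc11: "tate absv (\<lambda>_. 1) {..<d} \<subseteq> tate absv \<rho>1 V" using inc01 inc0_1 by blast
  have varV: "ser_var j \<in> tate absv \<rho>1 V" if "j \<in> V" for j by (rule R1.var_tate[OF that])
  have var0: "ser_var j \<in> tate absv \<rho>0 {..<d + n}" if "j < d + n" for j
    using R1.var_tate[of j "{..<d + n}"] that inc1_0 by blast
  have IV: "I \<subseteq> tate absv \<rho>1 V" using assms(2) inc11 unfolding is_ideal_def by blast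
  have TsaV: "T \<in> semianalytic_sets (spec absv \<rho>1 V I) (tate absv \<rho>1 V)"
    using Tsa unfolding semianalytic_def \<rho>1_def V_def .
  define res where "res = (\<lambda>(x::'k series \<Rightarrow> real) f. if f \<in> tate absv \<rho>1 V then x f else 0)"
  define T' where "T' = {x \<in> spec absv \<rho>2 V I. res x \<in> T}"
  have T'sa: "T' \<in> semianalytic_sets (spec absv \<rho>2 V I) (tate absv \<rho>2 V)"
    unfolding T'_def
  proof (rule sa_pull[OF TsaV _ inc12])
    show "\<forall>x\<in>spec absv \<rho>2 V I. res x \<in> spec absv \<rho>1 V I"
      unfolding res_def using res_spec[OF p1 p2 le] by blast
    show "\<forall>x\<in>spec absv \<rho>2 V I. \<forall>f\<in>tate absv \<rho>1 V. res x f = x f" unfolding res_def by simp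
  qed
  let ?Bn = "{x. \<forall>j\<in>{d..<d+n}. x (ser_var j) \<le> 1}"
  let ?Bm = "{x. \<forall>j\<in>{d + n..<d + n + m}. x (ser_var j) \<le> 1}"
  let ?B' = "{x. \<forall>j\<in>{d..<d + (n + m)}. x (ser_var j) \<le> 1}"
  have rad: "(\<lambda>i. if i < d then (\<lambda>_. 1::real) i else s') = \<rho>2" unfolding \<rho>2_def by simp
  have VV: "{..<d + (n + m)} = V" unfolding V_def by (simp add: add.assoc)
  have eq: "restr absv (\<lambda>_. 1) d ` (S \<inter> ?Bn) = restr absv (\<lambda>_. 1) d ` (T' \<inter> ?B')"
  proof (intro equalityI subsetI)
    fix z assume "z \<in> restr absv (\<lambda>_. 1) d ` (S \<inter> ?Bn)"
    then obtain w where w: "w \<in> S" "w \<in> ?Bn" "z = restr absv (\<lambda>_. 1) d w" by blast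
    then obtain y where y: "y \<in> T" "y \<in> ?Bm" "w = restr absv \<rho>0 (d + n) y" using Sdef by blast
    have ys: "y \<in> spec absv \<rho>1 V I" using sa_sub[OF TsaV] y(1) by blast
    have wy: "w (ser_var j) = y (ser_var j)" if "j < d + n" for j
      using var0[OF that] y(3) by (simp add: restr_def)
    have yv: "\<forall>j\<in>V. y (ser_var j) \<le> 1"
    proof
      fix j assume jV: "j \<in> V"
      show "y (ser_var j) \<le> 1"
      proof (cases "j < d")
        case True thus ?thesis using R1.var_le_radius[OF ys jV] by (simp add: \<rho>1_def \<rho>0_def)
      next
        case False
        show ?thesis
        proof (cases "j < d + n")
          case True
          hence "j \<in> {d..<d+n}" using False by simp
          hence "w (ser_var j) \<le> 1" using w(2) by blast
          thus ?thesis using wy[OF True] by simp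
        next
          case False2: False thus ?thesis using y(2) jV unfolding V_def by auto
        qed
      qed
    qed
    interpret E: ext absv \<rho>1 \<rho>2 V I y
      by unfold_locales (use p1 r2ge le fV ys yv in auto)
    have xs: "E.xe \<in> spec absv \<rho>2 V I" by (rule E.xe_spec[OF IV])
    have resx: "res E.xe = y"
    proof
      fix f show "res E.xe f = y f"
        unfolding res_def using E.xe_agree R1.spec_out[OF ys] by auto
    qed
    have "E.xe \<in> T'" unfolding T'_def using xs resx y(1) by simp
    moreover have "E.xe \<in> ?B'"
    proof (intro CollectI ballI)
      fix j assume "j \<in> {d..<d + (n + m)}"
      hence jV: "j \<in> V" unfolding V_def by auto
      thus "E.xe (ser_var j) \<le> 1" using E.xe_agree[OF varV[OF jV]] yv by auto
    qed
    moreover have "z = restr absv (\<lambda>_. 1) d E.xe"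
    proof
      fix f show "z f = restr absv (\<lambda>_. 1) d E.xe f"
      proof (cases "f \<in> tate absv (\<lambda>_. 1) {..<d}")
        case True
        hence "f \<in> tate absv \<rho>0 {..<d + n}" "f \<in> tate absv \<rho>1 V" using inc01 inc11 by auto
        thus ?thesis using True w(3) y(3) E.xe_agree by (simp add: restr_def)
      next
        case False thus ?thesis using w(3) by (simp add: restr_def)
      qed
    qed
    ultimately show "z \<in> restr absv (\<lambda>_. 1) d ` (T' \<inter> ?B')" by blast
  next
    fix z assume "z \<in> restr absv (\<lambda>_. 1) d ` (T' \<inter> ?B')"
    then obtain x where x: "x \<in> T'" "x \<in> ?B'" "z = restr absv (\<lambda>_. 1) d x" by blast
    have xs: "x \<in> spec absv \<rho>2 V I" and rx: "res x \<in> T" using x(1) unfolding T'_def by auto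
    have xy: "res x (ser_var j) = x (ser_var j)" if "j \<in> V" for j
      unfolding res_def using varV[OF that] by simp
    have "res x \<in> ?Bm"
    proof (intro CollectI ballI)
      fix j assume j: "j \<in> {d + n..<d + n + m}"
      hence "j \<in> V" "j \<in> {d..<d + (n + m)}" unfolding V_def by auto
      thus "res x (ser_var j) \<le> 1" using xy x(2) by auto
    qed
    hence wS: "restr absv \<rho>0 (d + n) (res x) \<in> S" using Sdef rx by blast
    have "restr absv \<rho>0 (d + n) (res x) \<in> ?Bn"
    proof (intro CollectI ballI)
      fix j assume j: "j \<in> {d..<d+n}"
      hence jV: "j \<in> V" and jB: "j \<in> {d..<d + (n + m)}" and jn: "j < d + n" unfolding V_def by auto
      have "restr absv \<rho>0 (d + n) (res x) (ser_var j) = x (ser_var j)"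
        using var0[OF jn] xy[OF jV] by (simp add: restr_def)
      thus "restr absv \<rho>0 (d + n) (res x) (ser_var j) \<le> 1" using x(2) jB by auto
    qed
    moreover have "z = restr absv (\<lambda>_. 1) d (restr absv \<rho>0 (d + n) (res x))"
    proof
      fix f show "z f = restr absv (\<lambda>_. 1) d (restr absv \<rho>0 (d + n) (res x)) f"
      proof (cases "f \<in> tate absv (\<lambda>_. 1) {..<d}")
        case True
        hence "f \<in> tate absv \<rho>0 {..<d + n}" "f \<in> tate absv \<rho>1 V" using inc01 inc11 by auto
        thus ?thesis using True x(3) by (simp add: restr_def res_def)
      next
        case False thus ?thesis using x(3) by (simp add: restr_def)
      qed
    qed
    ultimately show "z \<in> restr absv (\<lambda>_. 1) d ` (S \<inter> ?Bn)" using wS by blast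
  qed
  show ?thesis
    unfolding oc_subanalytic_def
  proof (intro exI[of _ "n + m"] exI[of _ s'] exI[of _ T'] conjI)
    show "1 < s'" by (rule s'gt)
    show "semianalytic absv (\<lambda>i. if i < d then (\<lambda>_. 1) i else s') (d + (n + m)) I T'"
      unfolding semianalytic_def rad VV by (rule T'sa)
    show "restr absv (\<lambda>_. 1) d ` (S \<inter> ?Bn) = restr absv (\<lambda>_. 1) d ` (T' \<inter> ?B')" by (rule eq)
  qed
qed

end
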